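(* Let $(Z,\langle\cdot\,,\cdot\rangle_Z)$ be a finite-dimensional real scalar product space with an orthonormal basis $z_1,\ldots,z_n$. Then there exist an admissible $\mathrm{Cl}(Z,\langle\cdot\,,\cdot\rangle_Z)$-module $(V,\langle\cdot\,,\cdot\rangle_V)$ of minimal dimension, with representation $J\colon \mathrm{Cl}(Z,\langle\cdot\,,\cdot\rangle_Z)\to\mathrm{End}(V)$, and an orthonormal basis $v_1,\ldots,v_m$ of $(V,\langle\cdot\,,\cdot\rangle_V)$, such that for all $z\in Z$ and $u,v\in V$ one has $\langle J_zu,J_zv\rangle_V=\langle z,z\rangle_Z\langle u,v\rangle_V$ and $J_z^2=-\langle z,z\rangle_Z\mathrm{Id}_V$, and moreover $$\langle J_{z_k}v_\alpha,v_\beta\rangle_V\in\{1,-1,0\}\quad\text{for all } k=1,\ldots,n,\ \alpha,\beta=1,\ldots,m.$$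
   Context: A scalar product is a real symmetric non-degenerate bilinear form (possibly indefinite); a basis $\{e_i\}$ is orthonormal if $\langle e_i,e_j\rangle=0$ for $i\ne j$ and $\langle e_i,e_i\rangle\in\{\pm1\}$. $\mathrm{Cl}(Z,\langle\cdot\,,\cdot\rangle_Z)$ denotes the Clifford algebra generated by $Z$ with relations $z^2=-\langle z,z\rangle_Z\cdot 1$; a module is a real vector space $V$ with an algebra homomorphism $J$ into $\mathrm{End}(V)$, written $z\mapsto J_z$. The module is admissible if $V$ carries a scalar product $\langle\cdot\,,\cdot\rangle_V$ (an admissible scalar product) such that $\langle J_zu,v\rangle_V=-\langle u,J_zv\rangle_V$ for all $z\in Z$, $u,v\in V$. "Minimal dimension" means minimal dimension among (nonzero) admissible $\mathrm{Cl}(Z,\langle\cdot\,,\cdot\rangle_Z)$-modules. *)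

theory Defs
  imports "HOL-Analysis.Analysis" "HOL-Library.Function_Algebras"
begin

(* Pointwise real vector space structure on functions, so that  nat \<Rightarrow> real
   can serve as an ambient space containing (copies of) every finite-dimensional
   real vector space. *)
instantiation "fun" :: (type, real_vector) real_vector
begin
definition scaleR_fun :: "real \<Rightarrow> ('a \<Rightarrow> 'b) \<Rightarrow> 'a \<Rightarrow> 'b"
  where "scaleR_fun r f = (\<lambda>x. r *\<^sub>R f x)"
instance
  by standard (auto simp: scaleR_fun_def fun_eq_iff scaleR_add_right scaleR_add_left)
end

definition bilinear_on :: "'a::real_vector set \<Rightarrow> ('a \<Rightarrow> 'a \<Rightarrow> real) \<Rightarrow> bool" where
  "bilinear_on S f \<longleftrightarrow>
     (\<forall>x\<in>S. \<forall>y\<in>S. \<forall>w\<in>S. \<forall>a b.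
        f (a *\<^sub>R x + b *\<^sub>R y) w = a * f x w + b * f y w \<and>
        f w (a *\<^sub>R x + b *\<^sub>R y) = a * f w x + b * f w y)"

definition scalar_product_on :: "'a::real_vector set \<Rightarrow> ('a \<Rightarrow> 'a \<Rightarrow> real) \<Rightarrow> bool" where
  "scalar_product_on S f \<longleftrightarrow>
     subspace S \<and> bilinear_on S f \<and>
     (\<forall>x\<in>S. \<forall>y\<in>S. f x y = f y x) \<and>
     (\<forall>x\<in>S. (\<forall>y\<in>S. f x y = 0) \<longrightarrow> x = 0)"

definition orthonormal_basis_on ::
  "'a::real_vector set \<Rightarrow> ('a \<Rightarrow> 'a \<Rightarrow> real) \<Rightarrow> nat \<Rightarrow> (nat \<Rightarrow> 'a) \<Rightarrow> bool" where
  "orthonormal_basis_on S f n e \<longleftrightarrow>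
     (\<forall>i<n. e i \<in> S) \<and> inj_on e {..<n} \<and> independent (e ` {..<n}) \<and>
     span (e ` {..<n}) = S \<and>
     (\<forall>i<n. \<forall>j<n. i \<noteq> j \<longrightarrow> f (e i) (e j) = 0) \<and>
     (\<forall>i<n. f (e i) (e i) = 1 \<or> f (e i) (e i) = -1)"

(* A module over Cl(Z,B) on the subspace V, given (via the universal property of the
   Clifford algebra) by a linear map z \<mapsto> J z from Z to End(V) with
   (J z)^2 = - B z z Id_V; such maps correspond exactly to (unital) algebra
   homomorphisms Cl(Z,B) \<rightarrow> End(V). *)
definition clifford_module ::
  "'z::real_vector set \<Rightarrow> ('z \<Rightarrow> 'z \<Rightarrow> real) \<Rightarrow> 'v::real_vector set \<Rightarrow> ('z \<Rightarrow> 'v \<Rightarrow> 'v) \<Rightarrow> bool" where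
  "clifford_module Z B V J \<longleftrightarrow>
     subspace V \<and>
     (\<forall>z\<in>Z. \<forall>u\<in>V. J z u \<in> V) \<and>
     (\<forall>z\<in>Z. \<forall>u\<in>V. \<forall>w\<in>V. \<forall>a b. J z (a *\<^sub>R u + b *\<^sub>R w) = a *\<^sub>R J z u + b *\<^sub>R J z w) \<and>
     (\<forall>z\<in>Z. \<forall>z'\<in>Z. \<forall>u\<in>V. \<forall>a b. J (a *\<^sub>R z + b *\<^sub>R z') u = a *\<^sub>R J z u + b *\<^sub>R J z' u) \<and>
     (\<forall>z\<in>Z. \<forall>u\<in>V. J z (J z u) = - (B z z *\<^sub>R u))"

definition admissible_module ::
  "'z::real_vector set \<Rightarrow> ('z \<Rightarrow> 'z \<Rightarrow> real) \<Rightarrow> 'v::real_vector set \<Rightarrow> ('z \<Rightarrow> 'v \<Rightarrow> 'v)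
     \<Rightarrow> ('v \<Rightarrow> 'v \<Rightarrow> real) \<Rightarrow> bool" where
  "admissible_module Z B V J g \<longleftrightarrow>
     clifford_module Z B V J \<and> scalar_product_on V g \<and>
     (\<forall>z\<in>Z. \<forall>u\<in>V. \<forall>w\<in>V. g (J z u) w = - g u (J z w))"

end

theory Submission
  imports Defs "HOL-Library.Nat_Bijection"
begin

lemma dim_mono_fd:
  fixes V W :: "'a::real_vector set"
  assumes "V \<subseteq> W" "finite S" "W \<subseteq> span S"
  shows "dim V \<le> dim W"
proof -
  obtain B where B: "B \<subseteq> V" "independent B" "V \<subseteq> span B" "card B = dim V"
    using basis_exists by blast
  obtain C where C: "C \<subseteq> W" "independent C" "W \<subseteq> span C" "card C = dim W"
    using basis_exists by blast
  have fC: "finite C" using independent_span_bound[OF assms(2) C(2)] C(1) assms(3) by blast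
  have "B \<subseteq> span C" using B(1) assms(1) C(3) by blast
  then have "card B \<le> card C" using independent_span_bound[OF fC B(2)] by blast
  then show ?thesis using B C by simp
qed

lemma dim_strict_fd:
  fixes V W :: "'a::real_vector set"
  assumes "V \<subseteq> W" "V \<noteq> W" "subspace V" "finite S" "W \<subseteq> span S"
  shows "dim V < dim W"
proof -
  obtain B where B: "B \<subseteq> V" "independent B" "V \<subseteq> span B" "card B = dim V"
    using basis_exists by blast
  obtain x where x: "x \<in> W" "x \<notin> V" using assms(1,2) by blast
  have spB: "span B \<subseteq> V" using B(1) assms(3) by (simp add: span_minimal)
  have xB: "x \<notin> span B" using spB x by blast
  have ind: "independent (insert x B)" using independent_insertI[OF xB B(2)] .
  have fB: "finite B" using independent_span_bound[OF assms(4) B(2)] B(1) assms(1,5) by blast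
  have "dim (insert x B) \<le> dim W"
    using dim_mono_fd[of "insert x B" W S] x B(1) assms by blast
  moreover have "dim (insert x B) = card B + 1"
    using dim_eq_card_independent[OF ind] fB x B(1) by (metis card_insert_disjoint Suc_eq_plus1 contra_subsetD)
  ultimately show ?thesis using B(4) by simp
qed

definition pm1 :: "real \<Rightarrow> bool" where "pm1 s \<longleftrightarrow> s = 1 \<or> s = -1"

lemma pm1_1[simp]: "pm1 1" and pm1_m1[simp]: "pm1 (-1)" by (auto simp: pm1_def)
lemma pm1_mult: "pm1 a \<Longrightarrow> pm1 b \<Longrightarrow> pm1 (a*b)" by (auto simp: pm1_def)
lemma pm1_uminus: "pm1 a \<Longrightarrow> pm1 (-a)" by (auto simp: pm1_def)
lemma pm1_sq: "pm1 a \<Longrightarrow> a*a = 1" by (auto simp: pm1_def)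
lemma pm1_ne0: "pm1 a \<Longrightarrow> a \<noteq> 0" by (auto simp: pm1_def)

definition sd :: "nat set \<Rightarrow> nat set \<Rightarrow> nat set" where "sd I K = (I - K) \<union> (K - I)"

locale adm =
  fixes B :: "'z::real_vector \<Rightarrow> 'z \<Rightarrow> real" and n :: nat and zb :: "nat \<Rightarrow> 'z"
    and W :: "'v::real_vector set" and J :: "'z \<Rightarrow> 'v \<Rightarrow> 'v" and g :: "'v \<Rightarrow> 'v \<Rightarrow> real"
  assumes spB: "scalar_product_on UNIV B" and onb: "orthonormal_basis_on UNIV B n zb"
    and adm: "admissible_module UNIV B W J g"
begin

lemma subW: "subspace W" using adm by (simp add: admissible_module_def clifford_module_def)
lemma JW: "u \<in> W \<Longrightarrow> J z u \<in> W" using adm by (simp add: admissible_module_def clifford_module_def)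
lemma Jlin: "u \<in> W \<Longrightarrow> w \<in> W \<Longrightarrow> J z (a *\<^sub>R u + b *\<^sub>R w) = a *\<^sub>R J z u + b *\<^sub>R J z w"
  using adm by (simp add: admissible_module_def clifford_module_def)
lemma Jzlin: "u \<in> W \<Longrightarrow> J (a *\<^sub>R z + b *\<^sub>R z') u = a *\<^sub>R J z u + b *\<^sub>R J z' u"
  using adm by (simp add: admissible_module_def clifford_module_def)
lemma Jsq: "u \<in> W \<Longrightarrow> J z (J z u) = - (B z z *\<^sub>R u)"
  using adm by (simp add: admissible_module_def clifford_module_def)
lemma gadj: "u \<in> W \<Longrightarrow> w \<in> W \<Longrightarrow> g (J z u) w = - g u (J z w)"
  using adm by (simp add: admissible_module_def)
lemma gsym: "u \<in> W \<Longrightarrow> w \<in> W \<Longrightarrow> g u w = g w u"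
  using adm by (simp add: admissible_module_def scalar_product_on_def)
lemma gnd: "u \<in> W \<Longrightarrow> (\<forall>w\<in>W. g u w = 0) \<Longrightarrow> u = 0"
  using adm by (simp add: admissible_module_def scalar_product_on_def)
lemma gbil: "x \<in> W \<Longrightarrow> y \<in> W \<Longrightarrow> w \<in> W \<Longrightarrow>
   g (a *\<^sub>R x + b *\<^sub>R y) w = a * g x w + b * g y w \<and> g w (a *\<^sub>R x + b *\<^sub>R y) = a * g w x + b * g w y"
  using adm by (simp add: admissible_module_def scalar_product_on_def bilinear_on_def)

lemma W0: "0 \<in> W" using subW by (simp add: subspace_0)
lemma Wadd: "x \<in> W \<Longrightarrow> y \<in> W \<Longrightarrow> x + y \<in> W" using subW by (simp add: subspace_add)
lemma Wscale: "x \<in> W \<Longrightarrow> c *\<^sub>R x \<in> W" using subW by (simp add: subspace_scale)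
lemma Wneg: "x \<in> W \<Longrightarrow> - x \<in> W" using subW by (simp add: subspace_neg)
lemma Wdiff: "x \<in> W \<Longrightarrow> y \<in> W \<Longrightarrow> x - y \<in> W" using subW by (simp add: subspace_diff)

lemma gscaleL: "x \<in> W \<Longrightarrow> w \<in> W \<Longrightarrow> g (c *\<^sub>R x) w = c * g x w"
  using gbil[of x x w c 0] by simp
lemma gscaleR: "x \<in> W \<Longrightarrow> w \<in> W \<Longrightarrow> g w (c *\<^sub>R x) = c * g w x"
  using gbil[of x x w c 0] by simp
lemma gaddL: "x \<in> W \<Longrightarrow> y \<in> W \<Longrightarrow> w \<in> W \<Longrightarrow> g (x + y) w = g x w + g y w"
  using gbil[of x y w 1 1] by simp
lemma gaddR: "x \<in> W \<Longrightarrow> y \<in> W \<Longrightarrow> w \<in> W \<Longrightarrow> g w (x + y) = g w x + g w y"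
  using gbil[of x y w 1 1] by simp
lemma gnegL: "x \<in> W \<Longrightarrow> w \<in> W \<Longrightarrow> g (- x) w = - g x w"
  using gscaleL[of x w "-1"] by simp
lemma gnegR: "x \<in> W \<Longrightarrow> w \<in> W \<Longrightarrow> g w (- x) = - g w x"
  using gscaleR[of x w "-1"] by simp
lemma gdiffL: "x \<in> W \<Longrightarrow> y \<in> W \<Longrightarrow> w \<in> W \<Longrightarrow> g (x - y) w = g x w - g y w"
  using gbil[of x y w 1 "-1"] by simp
lemma gdiffR: "x \<in> W \<Longrightarrow> y \<in> W \<Longrightarrow> w \<in> W \<Longrightarrow> g w (x - y) = g w x - g w y"
  using gbil[of x y w 1 "-1"] by simp

lemma Jscale: "u \<in> W \<Longrightarrow> J z (c *\<^sub>R u) = c *\<^sub>R J z u"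
  using Jlin[of u u z c 0] by simp
lemma Jadd: "u \<in> W \<Longrightarrow> w \<in> W \<Longrightarrow> J z (u + w) = J z u + J z w"
  using Jlin[of u w z 1 1] by simp
lemma Jneg: "u \<in> W \<Longrightarrow> J z (- u) = - J z u"
  using Jscale[of u z "-1"] by simp

lemma Bbil: "B (a *\<^sub>R x + b *\<^sub>R y) w = a * B x w + b * B y w \<and> B w (a *\<^sub>R x + b *\<^sub>R y) = a * B w x + b * B w y"
  using spB by (simp add: scalar_product_on_def bilinear_on_def)
lemma Bsym: "B x y = B y x" using spB by (simp add: scalar_product_on_def)

definition Jk :: "nat \<Rightarrow> 'v \<Rightarrow> 'v" where "Jk k = J (zb k)"
definition bk :: "nat \<Rightarrow> real" where "bk k = B (zb k) (zb k)"

lemma bk_pm1: "k < n \<Longrightarrow> pm1 (bk k)"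
  using onb by (auto simp: orthonormal_basis_on_def bk_def pm1_def)
lemma orth: "j < n \<Longrightarrow> k < n \<Longrightarrow> j \<noteq> k \<Longrightarrow> B (zb j) (zb k) = 0"
  using onb by (auto simp: orthonormal_basis_on_def)

lemma JkW: "u \<in> W \<Longrightarrow> Jk k u \<in> W" by (simp add: Jk_def JW)
lemma Jk_sq: "u \<in> W \<Longrightarrow> Jk k (Jk k u) = - (bk k *\<^sub>R u)" by (simp add: Jk_def bk_def Jsq)

lemma Jk_anti: assumes "j < n" "k < n" "j \<noteq> k" "u \<in> W"
  shows "Jk j (Jk k u) = - Jk k (Jk j u)"
proof -
  have e: "J (zb j + zb k) v = Jk j v + Jk k v" if "v \<in> W" for v
    using Jzlin[OF that, of 1 "zb j" 1 "zb k"] by (simp add: Jk_def)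
  have Bjk: "B (zb j + zb k) (zb j + zb k) = bk j + bk k"
  proof -
    have "B (zb j + zb k) (zb j + zb k) = B (zb j) (zb j + zb k) + B (zb k) (zb j + zb k)"
      using Bbil[of 1 "zb j" 1 "zb k" "zb j + zb k"] by simp
    also have "\<dots> = B (zb j) (zb j) + B (zb j) (zb k) + (B (zb k) (zb j) + B (zb k) (zb k))"
      using Bbil[of 1 "zb j" 1 "zb k" "zb j"] Bbil[of 1 "zb j" 1 "zb k" "zb k"] by simp
    finally show ?thesis using orth[OF assms(1-3)] orth[of k j] assms by (simp add: bk_def)
  qed
  have "J (zb j + zb k) (J (zb j + zb k) u) = - ((bk j + bk k) *\<^sub>R u)"
    using Jsq[OF assms(4)] Bjk by simp
  moreover have "J (zb j + zb k) (J (zb j + zb k) u) =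
     Jk j (Jk j u) + Jk j (Jk k u) + (Jk k (Jk j u) + Jk k (Jk k u))"
    using assms(4) by (simp add: e JkW Wadd Jadd Jk_def[symmetric])
  ultimately have "Jk j (Jk k u) + Jk k (Jk j u) = 0"
    using Jk_sq[OF assms(4)] by (simp add: algebra_simps)
  then show ?thesis by (simp add: eq_neg_iff_add_eq_0)
qed

lemma gJk: "u \<in> W \<Longrightarrow> w \<in> W \<Longrightarrow> g (Jk k u) w = - g u (Jk k w)"
  by (simp add: Jk_def gadj)


primrec Pm :: "nat set \<Rightarrow> nat \<Rightarrow> 'v \<Rightarrow> 'v" where
  "Pm I 0 = (\<lambda>u. u)"
| "Pm I (Suc m) = (if m \<in> I then (\<lambda>u. Pm I m (Jk m u)) else Pm I m)"

lemma PmW: "u \<in> W \<Longrightarrow> Pm I m u \<in> W"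
  by (induction m arbitrary: u) (auto simp: JkW)

lemma Pmlin: "u \<in> W \<Longrightarrow> w \<in> W \<Longrightarrow> Pm I m (a *\<^sub>R u + b *\<^sub>R w) = a *\<^sub>R Pm I m u + b *\<^sub>R Pm I m w"
proof (induction m arbitrary: u w)
  case 0 then show ?case by simp
next
  case (Suc m)
  show ?case
  proof (cases "m \<in> I")
    case True
    have "Jk m (a *\<^sub>R u + b *\<^sub>R w) = a *\<^sub>R Jk m u + b *\<^sub>R Jk m w" using Suc.prems by (simp add: Jk_def Jlin)
    then show ?thesis using True Suc by (simp add: JkW)
  next
    case False then show ?thesis using Suc by simp
  qed
qed

lemma Pmscale: "u \<in> W \<Longrightarrow> Pm I m (c *\<^sub>R u) = c *\<^sub>R Pm I m u"
  using Pmlin[of u u I m c 0] by simp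
lemma Pmneg: "u \<in> W \<Longrightarrow> Pm I m (- u) = - Pm I m u"
  using Pmscale[of u I m "-1"] by simp
lemma Pmadd: "u \<in> W \<Longrightarrow> w \<in> W \<Longrightarrow> Pm I m (u + w) = Pm I m u + Pm I m w"
  using Pmlin[of u w I m 1 1] by simp

lemma Pmcong: "I \<inter> {..<m} = K \<inter> {..<m} \<Longrightarrow> Pm I m = Pm K m"
proof (induction m)
  case 0 then show ?case by simp
next
  case (Suc m)
  have "I \<inter> {..<m} = K \<inter> {..<m}" using Suc.prems
    unfolding set_eq_iff by (metis IntI IntD1 IntD2 lessThan_iff less_SucI)
  moreover have "m \<in> I \<longleftrightarrow> m \<in> K" using Suc.prems
    unfolding set_eq_iff by (metis IntI IntD1 lessThan_iff lessI)
  ultimately show ?case using Suc.IH by simp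
qed

lemma Pm_empty: "Pm {} m = (\<lambda>u. u)"
  by (induction m) auto

lemma Pm_L: "k < n \<Longrightarrow> m \<le> k \<Longrightarrow> \<exists>s. pm1 s \<and> (\<forall>u\<in>W. Jk k (Pm I m u) = s *\<^sub>R Pm I m (Jk k u))"
proof (induction m)
  case 0 then show ?case by (intro exI[of _ 1]) simp
next
  case (Suc m)
  then obtain s where s: "pm1 s" "\<forall>u\<in>W. Jk k (Pm I m u) = s *\<^sub>R Pm I m (Jk k u)" by auto
  show ?case
  proof (cases "m \<in> I")
    case True
    have "Jk k (Pm I (Suc m) u) = (- s) *\<^sub>R Pm I (Suc m) (Jk k u)" if u: "u \<in> W" for u
    proof -
      have "Jk k (Pm I (Suc m) u) = s *\<^sub>R Pm I m (Jk k (Jk m u))" using True s(2) u by (simp add: JkW)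
      also have "Jk k (Jk m u) = - Jk m (Jk k u)" using Jk_anti[of k m u] Suc.prems u by simp
      finally show ?thesis using True u by (simp add: Pmneg JkW)
    qed
    then show ?thesis using pm1_uminus[OF s(1)] by blast
  next
    case False then show ?thesis using s by auto
  qed
qed

lemma Pm_M: "k < m \<Longrightarrow> m \<le> n \<Longrightarrow> \<exists>s. pm1 s \<and> (\<forall>u\<in>W. Jk k (Pm I m u) = s *\<^sub>R Pm (sd I {k}) m u)"
proof (induction m)
  case 0 then show ?case by simp
next
  case (Suc m)
  show ?case
  proof (cases "k = m")
    case True
    obtain s where s: "pm1 s" "\<forall>u\<in>W. Jk k (Pm I k u) = s *\<^sub>R Pm I k (Jk k u)"
      using Pm_L[of k k I] Suc.prems True by auto
    have c1: "Pm (sd I {k}) k = Pm I k" by (rule Pmcong) (auto simp: sd_def)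
    show ?thesis
    proof (cases "k \<in> I")
      case kI: True
      have "Jk k (Pm I (Suc m) u) = (- s * bk k) *\<^sub>R Pm (sd I {k}) (Suc m) u" if u: "u \<in> W" for u
      proof -
        have "k \<notin> sd I {k}" using kI by (auto simp: sd_def)
        then have e1: "Pm (sd I {k}) (Suc m) u = Pm I k u" using True c1 by simp
        have "Jk k (Pm I (Suc m) u) = s *\<^sub>R Pm I k (Jk k (Jk k u))" using True kI s u by (simp add: JkW)
        also have "\<dots> = s *\<^sub>R Pm I k ((- bk k) *\<^sub>R u)" using u by (simp only: Jk_sq scaleR_minus_left)
        also have "\<dots> = s *\<^sub>R ((- bk k) *\<^sub>R Pm I k u)" using Pmscale[of u I k "- bk k"] u by simp
        also have "\<dots> = (- s * bk k) *\<^sub>R Pm (sd I {k}) (Suc m) u" using e1 by simp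
        finally show ?thesis .
      qed
      moreover have "pm1 (- s * bk k)" using Suc.prems True by (intro pm1_mult pm1_uminus s(1) bk_pm1) simp
      ultimately show ?thesis by (intro exI[of _ "- s * bk k"]) simp
    next
      case kI: False
      have "Jk k (Pm I (Suc m) u) = s *\<^sub>R Pm (sd I {k}) (Suc m) u" if u: "u \<in> W" for u
      proof -
        have "k \<in> sd I {k}" using kI by (auto simp: sd_def)
        then have "Pm (sd I {k}) (Suc m) u = Pm I k (Jk k u)" using True c1 by simp
        moreover have "Jk k (Pm I (Suc m) u) = s *\<^sub>R Pm I k (Jk k u)" using True kI s u by simp
        ultimately show ?thesis by simp
      qed
      then show ?thesis using s(1) by blast
    qed
  next
    case False
    then have km: "k < m" using Suc.prems by simp
    then obtain s where s: "pm1 s" "\<forall>u\<in>W. Jk k (Pm I m u) = s *\<^sub>R Pm (sd I {k}) m u"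
      using Suc by auto
    have mm: "m \<in> sd I {k} \<longleftrightarrow> m \<in> I" using km by (auto simp: sd_def)
    have "Jk k (Pm I (Suc m) u) = s *\<^sub>R Pm (sd I {k}) (Suc m) u" if u: "u \<in> W" for u
      using s(2) u mm by (cases "m \<in> I") (auto simp: JkW)
    then show ?thesis using s(1) by blast
  qed
qed

definition P :: "nat set \<Rightarrow> 'v \<Rightarrow> 'v" where "P I = Pm I n"

lemma PW: "u \<in> W \<Longrightarrow> P I u \<in> W" by (simp add: P_def PmW)
lemma Pscale: "u \<in> W \<Longrightarrow> P I (c *\<^sub>R u) = c *\<^sub>R P I u" by (simp add: P_def Pmscale)
lemma Pneg: "u \<in> W \<Longrightarrow> P I (- u) = - P I u" by (simp add: P_def Pmneg)
lemma Padd: "u \<in> W \<Longrightarrow> w \<in> W \<Longrightarrow> P I (u + w) = P I u + P I w" by (simp add: P_def Pmadd)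
lemma Pdiff: "u \<in> W \<Longrightarrow> w \<in> W \<Longrightarrow> P I (u - w) = P I u - P I w"
  using Pmlin[of u w I n 1 "-1"] by (simp add: P_def)
lemma P_empty: "P {} u = u" by (simp add: P_def Pm_empty)

lemma Jk_P: "k < n \<Longrightarrow> \<exists>s. pm1 s \<and> (\<forall>u\<in>W. Jk k (P I u) = s *\<^sub>R P (sd I {k}) u)"
  unfolding P_def using Pm_M[of k n I] by blast

lemma Pm_comp: "m \<le> n \<Longrightarrow> \<exists>s. pm1 s \<and> (\<forall>u\<in>W. Pm I m (P K u) = s *\<^sub>R P (sd (I \<inter> {..<m}) K) u)"
proof (induction m arbitrary: K)
  case 0 then show ?case by (intro exI[of _ 1]) (simp add: sd_def)
next
  case (Suc m)
  show ?case
  proof (cases "m \<in> I")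
    case True
    obtain s1 where s1: "pm1 s1" "\<forall>u\<in>W. Jk m (P K u) = s1 *\<^sub>R P (sd K {m}) u"
      using Jk_P[of m K] Suc.prems by auto
    obtain s2 where s2: "pm1 s2" "\<forall>u\<in>W. Pm I m (P (sd K {m}) u) = s2 *\<^sub>R P (sd (I \<inter> {..<m}) (sd K {m})) u"
      using Suc by auto
    have se: "sd (I \<inter> {..<m}) (sd K {m}) = sd (I \<inter> {..<Suc m}) K"
      using True by (auto simp: sd_def)
    have "Pm I (Suc m) (P K u) = (s1 * s2) *\<^sub>R P (sd (I \<inter> {..<Suc m}) K) u" if u: "u \<in> W" for u
      using True s1(2) s2(2) u se by (simp add: Pmscale PW)
    then show ?thesis using pm1_mult[OF s1(1) s2(1)] by blast
  next
    case False
    then have "I \<inter> {..<Suc m} = I \<inter> {..<m}" by (auto simp: less_Suc_eq)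
    then show ?thesis using Suc False by auto
  qed
qed

lemma P_comp: "I \<subseteq> {..<n} \<Longrightarrow> \<exists>s. pm1 s \<and> (\<forall>u\<in>W. P I (P K u) = s *\<^sub>R P (sd I K) u)"
proof -
  assume "I \<subseteq> {..<n}"
  then have "I \<inter> {..<n} = I" by auto
  then show ?thesis using Pm_comp[of n I K] by (simp add: P_def[of I])
qed

lemma P_sq: "I \<subseteq> {..<n} \<Longrightarrow> \<exists>q. pm1 q \<and> (\<forall>u\<in>W. P I (P I u) = q *\<^sub>R u)"
  using P_comp[of I I] by (simp add: sd_def P_empty)

lemma Pm_adj: "m \<le> n \<Longrightarrow> \<exists>s. pm1 s \<and> (\<forall>u\<in>W. \<forall>v\<in>W. g (Pm I m u) v = s * g u (Pm I m v))"
proof (induction m)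
  case 0 then show ?case by (intro exI[of _ 1]) simp
next
  case (Suc m)
  then obtain s where s: "pm1 s" "\<forall>u\<in>W. \<forall>v\<in>W. g (Pm I m u) v = s * g u (Pm I m v)" by auto
  obtain s' where s': "pm1 s'" "\<forall>u\<in>W. Jk m (Pm I m u) = s' *\<^sub>R Pm I m (Jk m u)"
    using Pm_L[of m m I] Suc.prems by auto
  show ?case
  proof (cases "m \<in> I")
    case True
    have "g (Pm I (Suc m) u) v = (- s * s') * g u (Pm I (Suc m) v)" if "u \<in> W" "v \<in> W" for u v
    proof -
      have "g (Pm I (Suc m) u) v = s * g (Jk m u) (Pm I m v)" using True s(2) that by (simp add: JkW)
      also have "\<dots> = - s * g u (Jk m (Pm I m v))" using gJk that by (simp add: PmW)
      also have "\<dots> = - s * g u (s' *\<^sub>R Pm I m (Jk m v))" using s'(2) that by simp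
      also have "\<dots> = (- s * s') * g u (Pm I (Suc m) v)" using True that by (simp add: gscaleR PmW JkW)
      finally show ?thesis .
    qed
    then show ?thesis using pm1_mult[OF pm1_uminus[OF s(1)] s'(1)] by blast
  next
    case False then show ?thesis using s by auto
  qed
qed

lemma P_adj: "\<exists>s. pm1 s \<and> (\<forall>u\<in>W. \<forall>v\<in>W. g (P I u) v = s * g u (P I v))"
  using Pm_adj[of n I] by (simp add: P_def)

lemma P_commute: assumes "I \<subseteq> {..<n}" "K \<subseteq> {..<n}"
  shows "\<exists>s. pm1 s \<and> (\<forall>u\<in>W. P I (P K u) = s *\<^sub>R P K (P I u))"
proof -
  obtain s1 where s1: "pm1 s1" "\<forall>u\<in>W. P I (P K u) = s1 *\<^sub>R P (sd I K) u" using P_comp[OF assms(1)] by auto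
  obtain s2 where s2: "pm1 s2" "\<forall>u\<in>W. P K (P I u) = s2 *\<^sub>R P (sd K I) u" using P_comp[OF assms(2)] by auto
  have "sd K I = sd I K" by (auto simp: sd_def)
  then have "\<forall>u\<in>W. P I (P K u) = (s1 * s2) *\<^sub>R P K (P I u)"
    using s1 s2 pm1_sq[OF s2(1)] by simp
  then show ?thesis using pm1_mult[OF s1(1) s2(1)] by blast
qed

lemma sd_sub: "I \<subseteq> {..<n} \<Longrightarrow> K \<subseteq> {..<n} \<Longrightarrow> sd I K \<subseteq> {..<n}" by (auto simp: sd_def)


definition nondeg :: "'v set \<Rightarrow> bool" where
  "nondeg X \<longleftrightarrow> (\<forall>x\<in>X. (\<forall>y\<in>X. g x y = 0) \<longrightarrow> x = 0)"

definition Q :: "'v set \<Rightarrow> bool" where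
  "Q X \<longleftrightarrow> subspace X \<and> X \<subseteq> W \<and> X \<noteq> {0} \<and> nondeg X \<and>
     (\<forall>I\<subseteq>{..<n}. (\<forall>x\<in>X. P I x \<in> X) \<or> (\<forall>x\<in>X. g x (P I x) = 0))"

lemma Q_W: "W \<noteq> {0} \<Longrightarrow> Q W"
  using subW gnd by (auto simp: Q_def nondeg_def PW)

lemma P0: "P I 0 = 0" using Pscale[of 0 I 0] W0 by simp

lemma nondeg_ex: assumes "subspace X" "X \<subseteq> W" "X \<noteq> {0}" "nondeg X"
  shows "\<exists>w\<in>X. g w w \<noteq> 0"
proof (rule ccontr)
  assume H: "\<not> ?thesis"
  obtain x where x: "x \<in> X" "x \<noteq> 0" using assms(1,3) subspace_0 by blast
  then obtain y where y: "y \<in> X" "g x y \<noteq> 0" using assms(4) unfolding nondeg_def by blast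
  have xy: "x + y \<in> X" using assms(1) x y subspace_add by blast
  have W: "x \<in> W" "y \<in> W" using x y assms(2) by auto
  have "g (x + y) (x + y) = g x x + g x y + (g y x + g y y)"
    using W by (simp add: gaddL gaddR Wadd)
  then have "g (x+y) (x+y) = 2 * g x y" using H x y gsym[OF W] by auto
  then show False using H xy y by auto
qed

end

locale adm_fd = adm +
  fixes S0 assumes fS0: "finite S0" and WS0: "W \<subseteq> span S0" and Wnz: "W \<noteq> {0}"

locale xmin = adm_fd +
  fixes X assumes QX: "Q X" and Xmin: "\<And>Y. Q Y \<Longrightarrow> dim X \<le> dim Y"
begin

lemma X_sub: "subspace X" and XW: "X \<subseteq> W" and Xnz: "X \<noteq> {0}" and Xnd: "nondeg X"
  and XP: "\<And>I. I \<subseteq> {..<n} \<Longrightarrow> (\<forall>x\<in>X. P I x \<in> X) \<or> (\<forall>x\<in>X. g x (P I x) = 0)"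
  using QX by (auto simp: Q_def)

lemma Xadd: "x \<in> X \<Longrightarrow> y \<in> X \<Longrightarrow> x + y \<in> X" using X_sub subspace_add by blast
lemma Xscale: "x \<in> X \<Longrightarrow> c *\<^sub>R x \<in> X" using X_sub subspace_scale by blast
lemma XinW: "x \<in> X \<Longrightarrow> x \<in> W" using XW by blast

lemma split_inv:
  assumes I: "I \<subseteq> {..<n}" and pres: "\<forall>x\<in>X. P I x \<in> X"
    and sa: "\<forall>u\<in>W. \<forall>v\<in>W. g (P I u) v = g u (P I v)"
    and sq: "\<forall>u\<in>W. P I (P I u) = u"
  shows "(\<forall>x\<in>X. P I x = x) \<or> (\<forall>x\<in>X. P I x = - x)"
proof (rule ccontr)
  assume H: "\<not> ?thesis"
  define E where "E = {x\<in>X. P I x = x}"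
  have EX: "E \<subseteq> X" by (auto simp: E_def)
  have subE: "subspace E"
    unfolding subspace_def E_def
    using X_sub P0 by (auto simp: subspace_def Padd Pscale XinW)
  obtain x1 where x1: "x1 \<in> X" "P I x1 \<noteq> - x1" using H by blast
  have "x1 + P I x1 \<in> E" using x1 pres sq XinW by (auto simp: E_def Xadd Padd PW add.commute)
  moreover have "x1 + P I x1 \<noteq> 0" using x1(2) by (metis add.commute add_eq_0_iff)
  ultimately have Enz: "E \<noteq> {0}" by blast
  obtain x2 where x2: "x2 \<in> X" "P I x2 \<noteq> x2" using H by blast
  have EneX: "E \<noteq> X" using x2 by (auto simp: E_def)
  have ndE: "nondeg E"
    unfolding nondeg_def
  proof (intro ballI impI)
    fix x assume x: "x \<in> E" and h: "\<forall>y\<in>E. g x y = 0"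
    have xX: "x \<in> X" and Px: "P I x = x" using x by (auto simp: E_def)
    have "g x y = 0" if y: "y \<in> X" for y
    proof -
      have yE: "y + P I y \<in> E" using y pres sq XinW by (auto simp: E_def Xadd Padd PW add.commute)
      have "g x (y + P I y) = g x y + g x (P I y)" using xX y XinW by (simp add: gaddR PW)
      moreover have "g x (P I y) = g x y" using sa Px xX y XinW by (metis)
      ultimately show ?thesis using h yE by simp
    qed
    then show "x = 0" using Xnd xX unfolding nondeg_def by blast
  qed
  have QE: "Q E"
    unfolding Q_def
  proof (intro conjI allI impI)
    show "subspace E" "E \<subseteq> W" "E \<noteq> {0}" "nondeg E" using subE EX XW Enz ndE by auto
  next
    fix K assume K: "K \<subseteq> {..<n}"
    show "(\<forall>x\<in>E. P K x \<in> E) \<or> (\<forall>x\<in>E. g x (P K x) = 0)"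
    proof (cases "\<forall>x\<in>X. P K x \<in> X")
      case True
      obtain c where c: "pm1 c" "\<forall>u\<in>W. P I (P K u) = c *\<^sub>R P K (P I u)" using P_commute[OF I K] by auto
      show ?thesis
      proof (cases "c = 1")
        case True
        then have "\<forall>x\<in>E. P K x \<in> E" using c(2) \<open>\<forall>x\<in>X. P K x \<in> X\<close> XinW by (auto simp: E_def)
        then show ?thesis by blast
      next
        case False
        then have cm: "c = -1" using c(1) by (simp add: pm1_def)
        have "g x (P K x) = 0" if x: "x \<in> E" for x
        proof -
          have xW: "x \<in> W" and Px: "P I x = x" using x XinW by (auto simp: E_def)
          have "g x (P K x) = g (P I x) (P K x)" using Px by simp
          also have "\<dots> = g x (P I (P K x))" using sa xW by (simp add: PW)
          also have "\<dots> = - g x (P K x)" using c(2) cm xW Px by (simp add: gnegR PW)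
          finally show ?thesis by simp
        qed
        then show ?thesis by blast
      qed
    next
      case False
      then have "\<forall>x\<in>X. g x (P K x) = 0" using XP[OF K] by blast
      then show ?thesis using EX by blast
    qed
  qed
  have "dim E < dim X" using dim_strict_fd[OF EX EneX subE fS0] XW WS0 by blast
  then show False using Xmin[OF QE] by simp
qed


definition Tset :: "nat set set" where
  "Tset = {I. I \<subseteq> {..<n} \<and> (\<forall>x\<in>X. P I x \<in> X) \<and> (\<forall>u\<in>W. \<forall>v\<in>W. g (P I u) v = g u (P I v))
              \<and> (\<forall>u\<in>W. P I (P I u) = - u)}"

lemma Tset_finite: "finite Tset"
  by (rule finite_subset[of _ "Pow {..<n}"]) (auto simp: Tset_def)

lemma rot_step:
  assumes I0: "I0 \<in> Tset" and F: "F \<subseteq> Tset"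
    and w: "w \<in> X" "g w w \<noteq> 0" "\<forall>I\<in>F. g w (P I w) = 0"
  shows "\<exists>w'\<in>X. g w' w' \<noteq> 0 \<and> (\<forall>I\<in>insert I0 F. g w' (P I w') = 0)"
proof -
  have I0n: "I0 \<subseteq> {..<n}" and pres0: "\<forall>x\<in>X. P I0 x \<in> X"
    and sa0: "\<forall>u\<in>W. \<forall>v\<in>W. g (P I0 u) v = g u (P I0 v)" and sq0: "\<forall>u\<in>W. P I0 (P I0 u) = - u"
    using I0 by (auto simp: Tset_def)
  define a where "a = g w w"
  define b where "b = g w (P I0 w)"
  have wW: "w \<in> W" using w XinW by blast
  have Cw: "P I0 w \<in> X" using pres0 w by blast
  have CwW: "P I0 w \<in> W" using Cw XinW by blast
  show ?thesis
  proof (cases "b = 0")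
    case True then show ?thesis using w b_def by auto
  next
    case bnz: False
    define r where "r = sqrt (a\<^sup>2 + b\<^sup>2)"
    define c where "c = a + r"
    have r2: "r * r = a * a + b * b" unfolding r_def by (simp add: power2_eq_square[symmetric])
    have "sqrt (a\<^sup>2) < sqrt (a\<^sup>2 + b\<^sup>2)" by (rule real_sqrt_less_mono) (use bnz in simp)
    then have rpos: "r > \<bar>a\<bar>" unfolding r_def by simp
    have cpos: "c > 0" unfolding c_def using rpos by linarith
    define w' where "w' = c *\<^sub>R w + b *\<^sub>R P I0 w"
    have w'X: "w' \<in> X" unfolding w'_def using w Cw by (simp add: Xadd Xscale)
    have w'W: "w' \<in> W" using w'X XinW by blast
    have gCC: "g (P I0 w) (P I0 w) = - a" using sa0 sq0 wW CwW a_def by (simp add: gnegR)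
    have gCw: "g (P I0 w) w = b" using gsym[OF CwW wW] b_def by simp
    have Cw': "P I0 w' = c *\<^sub>R P I0 w - b *\<^sub>R w"
      unfolding w'_def using wW CwW sq0 by (simp add: Padd Pscale Wscale)
    have g1: "g w' w' = c*c*a + 2*c*b*b - b*b*a"
      unfolding w'_def using wW CwW gCC gCw a_def b_def
      by (simp add: gaddL gaddR gscaleL gscaleR Wscale Wadd algebra_simps)
    have "g w' w' = 2 * c * (a*a + b*b)"
      unfolding g1 c_def using r2 by (simp add: algebra_simps)
    then have gw'nz: "g w' w' \<noteq> 0" using cpos bnz by (simp add: add_nonneg_eq_0_iff)
    have g2: "g w' (P I0 w') = c*c*b - 2*c*a*b - b*b*b"
      unfolding Cw' unfolding w'_def using wW CwW gCC gCw a_def b_def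
      by (simp add: gaddL gaddR gscaleL gscaleR gdiffL gdiffR Wscale Wadd Wdiff algebra_simps)
    have g2z: "g w' (P I0 w') = 0"
      unfolding g2 c_def using r2 by (simp add: algebra_simps power2_eq_square)
    have "g w' (P I w') = 0" if IF: "I \<in> F" for I
    proof -
      have In: "I \<subseteq> {..<n}" and pres: "\<forall>x\<in>X. P I x \<in> X"
        and sa: "\<forall>u\<in>W. \<forall>v\<in>W. g (P I u) v = g u (P I v)" and sq: "\<forall>u\<in>W. P I (P I u) = - u"
        using IF F by (auto simp: Tset_def)
      have gw: "g w (P I w) = 0" using w IF by blast
      obtain e where e: "pm1 e" "\<forall>u\<in>W. P I (P I0 u) = e *\<^sub>R P I0 (P I u)" using P_commute[OF In I0n] by auto
      have PIW: "\<And>u. u \<in> W \<Longrightarrow> P I u \<in> W" by (simp add: PW)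
      show ?thesis
      proof (cases "e = 1")
        case True
        obtain s where s: "pm1 s" "\<forall>u\<in>W. P I (P I0 u) = s *\<^sub>R P (sd I I0) u" using P_comp[OF In] by auto
        define K where "K = sd I I0"
        have Kn: "K \<subseteq> {..<n}" using sd_sub[OF In I0n] K_def by simp
        have PK: "\<forall>u\<in>W. P K u = s *\<^sub>R P I (P I0 u)"
          using s pm1_sq[OF s(1)] K_def by (auto simp: algebra_simps)
        have presK: "\<forall>x\<in>X. P K x \<in> X" using PK pres pres0 XinW by (simp add: Xscale)
        have saK: "\<forall>u\<in>W. \<forall>v\<in>W. g (P K u) v = g u (P K v)"
        proof (intro ballI)
          fix u v assume uv: "u \<in> W" "v \<in> W"
          have "g (P K u) v = s * g (P I (P I0 u)) v" using PK uv by (simp add: gscaleL PW)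
          also have "\<dots> = s * g u (P I0 (P I v))" using sa sa0 uv by (simp add: PW)
          also have "\<dots> = s * g u (P I (P I0 v))" using e(2) True uv by simp
          also have "\<dots> = g u (P K v)" using PK uv by (simp add: gscaleR PW)
          finally show "g (P K u) v = g u (P K v)" .
        qed
        have sqK: "\<forall>u\<in>W. P K (P K u) = u"
        proof
          fix u assume u: "u \<in> W"
          have "P K (P K u) = (s * s) *\<^sub>R P I (P I0 (P I (P I0 u)))" using PK u by (simp add: PW Pscale)
          also have "P I0 (P I (P I0 u)) = P I (P I0 (P I0 u))" using e(2) True u by (simp add: PW)
          also have "P I0 (P I0 u) = - u" using sq0 u by simp
          finally show "P K (P K u) = u" using pm1_sq[OF s(1)] sq u by (simp add: Pneg PW)
        qed
        obtain \<epsilon> where eps: "\<epsilon> = 1 \<or> \<epsilon> = -1" "\<forall>x\<in>X. P K x = \<epsilon> *\<^sub>R x"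
          using split_inv[OF Kn presK saK sqK] by (metis scaleR_minus1_left scaleR_one)
        have "P I w = - (s * \<epsilon>) *\<^sub>R P I0 w"
        proof -
          have "P K (P I0 w) = \<epsilon> *\<^sub>R P I0 w" using eps Cw by blast
          moreover have "P K (P I0 w) = s *\<^sub>R P I (- w)" using PK CwW sq0 wW by simp
          ultimately have "- (s *\<^sub>R P I w) = \<epsilon> *\<^sub>R P I0 w" using wW by (simp add: Pneg)
          then have "s *\<^sub>R P I w = - (\<epsilon> *\<^sub>R P I0 w)" by (metis minus_minus)
          then have "(s * s) *\<^sub>R P I w = - ((s * \<epsilon>) *\<^sub>R P I0 w)" by (metis scaleR_scaleR scaleR_minus_right)
          then show ?thesis using pm1_sq[OF s(1)] by simp
        qed
        then have "g w (P I w) = - (s * \<epsilon>) * b" using wW CwW b_def by (simp add: gscaleR gnegR Wscale)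
        moreover have "s * \<epsilon> \<noteq> 0" using pm1_ne0[OF s(1)] eps by auto
        ultimately have False using gw bnz by simp
        then show ?thesis ..
      next
        case False
        then have em: "e = -1" using e(1) by (simp add: pm1_def)
        have comm: "\<forall>u\<in>W. P I (P I0 u) = - P I0 (P I u)" using e(2) em by simp
        have comm2: "\<forall>u\<in>W. P I0 (P I u) = - P I (P I0 u)" using comm by simp
        have t1: "g (P I0 w) (P I (P I0 w)) = 0"
        proof -
          have "g (P I0 w) (P I (P I0 w)) = g w (P I0 (P I (P I0 w)))" using sa0 wW by (simp add: PW)
          also have "P I0 (P I (P I0 w)) = - P I (P I0 (P I0 w))" using comm2 CwW by blast
          also have "\<dots> = P I w" using sq0 wW by (simp add: Pneg)
          finally show ?thesis using gw by simp
        qed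
        have t2: "g w (P I (P I0 w)) + g (P I0 w) (P I w) = 0"
        proof -
          have "g (P I0 w) (P I w) = g w (P I0 (P I w))" using sa0 wW by (simp add: PW)
          also have "\<dots> = - g w (P I (P I0 w))" using comm2 wW by (simp add: gnegR PW)
          finally show ?thesis by simp
        qed
        have PIw': "P I w' = c *\<^sub>R P I w + b *\<^sub>R P I (P I0 w)"
          unfolding w'_def using wW CwW by (simp add: Padd Pscale Wscale)
        have "g w' (P I w') = c*c * g w (P I w) + c*b * (g w (P I (P I0 w)) + g (P I0 w) (P I w))
                + b*b * g (P I0 w) (P I (P I0 w))"
          unfolding PIw' unfolding w'_def using wW CwW
          by (simp add: gaddL gaddR gscaleL gscaleR Wscale Wadd PW algebra_simps)
        then show ?thesis using gw t1 t2 by simp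
      qed
    qed
    then show ?thesis using w'X gw'nz g2z by auto
  qed
qed

lemma rot_all: "F \<subseteq> Tset \<Longrightarrow> \<exists>w\<in>X. g w w \<noteq> 0 \<and> (\<forall>I\<in>F. g w (P I w) = 0)"
proof (induction F rule: infinite_finite_induct)
  case (infinite F)
  then show ?case using Tset_finite finite_subset by blast
next
  case empty
  then show ?case using nondeg_ex[OF X_sub XW Xnz Xnd] by auto
next
  case (insert I0 F)
  then obtain w where "w \<in> X" "g w w \<noteq> 0" "\<forall>I\<in>F. g w (P I w) = 0" by auto
  then show ?case using rot_step[of I0 F w] insert.prems by auto
qed

lemma good_exists: "\<exists>w\<in>W. g w w \<noteq> 0 \<and> (\<forall>I\<subseteq>{..<n}. P I w = w \<or> P I w = - w \<or> g w (P I w) = 0)"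
proof -
  obtain w where w: "w \<in> X" "g w w \<noteq> 0" "\<forall>I\<in>Tset. g w (P I w) = 0" using rot_all[of Tset] by auto
  have wW: "w \<in> W" using w XinW by blast
  have "P I w = w \<or> P I w = - w \<or> g w (P I w) = 0" if I: "I \<subseteq> {..<n}" for I
  proof (cases "\<forall>x\<in>X. P I x \<in> X")
    case False then show ?thesis using XP[OF I] w by blast
  next
    case pres: True
    obtain s where s: "pm1 s" "\<forall>u\<in>W. \<forall>v\<in>W. g (P I u) v = s * g u (P I v)" using P_adj by blast
    obtain q where q: "pm1 q" "\<forall>u\<in>W. P I (P I u) = q *\<^sub>R u" using P_sq[OF I] by blast
    show ?thesis
    proof (cases "s = 1")
      case False
      then have sm: "s = -1" using s(1) by (simp add: pm1_def)
      have "g w (P I w) = g (P I w) w" using gsym wW by (simp add: PW)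
      also have "\<dots> = - g w (P I w)" using s(2) sm wW by simp
      finally show ?thesis by simp
    next
      case s1: True
      show ?thesis
      proof (cases "q = 1")
        case True
        have "(\<forall>x\<in>X. P I x = x) \<or> (\<forall>x\<in>X. P I x = - x)"
          using split_inv[OF I pres] s s1 q True by simp
        then show ?thesis using w by blast
      next
        case False
        then have "q = -1" using q(1) by (simp add: pm1_def)
        then have "I \<in> Tset" using I pres s s1 q by (simp add: Tset_def)
        then show ?thesis using w by blast
      qed
    qed
  qed
  then show ?thesis using wW w by blast
qed


end

lemma subspaceI': "0 \<in> S \<Longrightarrow> (\<And>x y. x \<in> S \<Longrightarrow> y \<in> S \<Longrightarrow> x + y \<in> S) \<Longrightarrow>
   (\<And>c x. x \<in> S \<Longrightarrow> c *\<^sub>R x \<in> S) \<Longrightarrow> subspace S"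
  by (simp add: subspace_def)

context adm begin

lemma Wsum: "finite A \<Longrightarrow> (\<And>a. a \<in> A \<Longrightarrow> f a \<in> W) \<Longrightarrow> sum f A \<in> W"
  using subW by (simp add: subspace_sum)

lemma gsumL: "finite A \<Longrightarrow> (\<And>a. a \<in> A \<Longrightarrow> f a \<in> W) \<Longrightarrow> y \<in> W \<Longrightarrow> g (sum f A) y = (\<Sum>a\<in>A. g (f a) y)"
proof (induction A rule: finite_induct)
  case empty then show ?case using gscaleL[of 0 y 0] W0 by simp
next
  case (insert a A) then show ?case by (simp add: gaddL Wsum)
qed

definition good :: "'v \<Rightarrow> bool" where
  "good w \<longleftrightarrow> (\<forall>I\<subseteq>{..<n}. P I w = w \<or> P I w = - w \<or> g w (P I w) = 0)"

lemma nice_sub: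
  assumes wW: "w \<in> W" and gw: "g w w \<noteq> 0" and gd: "good w"
  shows "\<exists>V m vb. admissible_module UNIV B V J g \<and> V \<noteq> {0} \<and> V \<subseteq> W \<and>
           orthonormal_basis_on V g m vb \<and>
           (\<forall>k<n. \<forall>\<alpha><m. \<forall>\<beta><m. g (J (zb k) (vb \<alpha>)) (vb \<beta>) \<in> {1, -1, 0})"
proof -
  define c where "c = 1 / sqrt \<bar>g w w\<bar>"
  define w0 where "w0 = c *\<^sub>R w"
  have w0W: "w0 \<in> W" using wW by (simp add: w0_def Wscale)
  have cc: "c * c = 1 / \<bar>g w w\<bar>" using gw by (simp add: c_def)
  have gw0: "pm1 (g w0 w0)"
  proof -
    have "g w0 w0 = c * c * g w w" using wW by (simp add: w0_def gscaleL gscaleR Wscale)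
    then have "g w0 w0 = g w w / \<bar>g w w\<bar>" using cc by simp
    then show ?thesis using gw by (auto simp: pm1_def abs_if)
  qed
  have gd0: "P I w0 = w0 \<or> P I w0 = - w0 \<or> g w0 (P I w0) = 0" if I: "I \<subseteq> {..<n}" for I
  proof -
    have e: "P I w0 = c *\<^sub>R P I w" using wW by (simp add: w0_def Pscale)
    have "P I w = w \<or> P I w = - w \<or> g w (P I w) = 0" using gd I by (simp add: good_def)
    then show ?thesis
    proof (elim disjE)
      assume "g w (P I w) = 0" then show ?thesis using e wW by (simp add: w0_def gscaleL gscaleR Wscale PW)
    next
      assume "P I w = w" then show ?thesis using e by (simp add: w0_def)
    next
      assume "P I w = - w" then show ?thesis using e by (simp add: w0_def)
    qed
  qed
  define v where "v I = P I w0" for I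
  have vW: "v I \<in> W" for I using w0W by (simp add: v_def PW)
  have pairs: "v K = v I \<or> v K = - v I \<or> g (v I) (v K) = 0"
    if I: "I \<subseteq> {..<n}" and K: "K \<subseteq> {..<n}" for I K
  proof -
    obtain s where s: "pm1 s" "\<forall>u\<in>W. \<forall>v\<in>W. g (P I u) v = s * g u (P I v)" using P_adj by blast
    obtain s' where s': "pm1 s'" "\<forall>u\<in>W. P I (P K u) = s' *\<^sub>R P (sd I K) u" using P_comp[OF I] by blast
    obtain q where q: "pm1 q" "\<forall>u\<in>W. P I (P I u) = q *\<^sub>R u" using P_sq[OF I] by blast
    have gv: "g (v I) (v K) = s * s' * g w0 (P (sd I K) w0)"
      using s(2) s'(2) w0W by (simp add: v_def PW gscaleR)
    from gd0[OF sd_sub[OF I K]] show ?thesis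
    proof (elim disjE)
      assume "g w0 (P (sd I K) w0) = 0" then show ?thesis using gv by simp
    next
      assume h: "P (sd I K) w0 = w0"
      have "P I (v K) = s' *\<^sub>R w0" using s'(2) w0W h by (simp add: v_def)
      then have a1: "P I (P I (v K)) = s' *\<^sub>R v I" using w0W by (simp add: v_def Pscale)
      have "P I (P I (v K)) = q *\<^sub>R v K" using q(2) vW by blast
      then have "q *\<^sub>R v K = s' *\<^sub>R v I" using a1 by simp
      then have "(q * q) *\<^sub>R v K = (q * s') *\<^sub>R v I" by (metis scaleR_scaleR)
      then have "v K = (q * s') *\<^sub>R v I" using pm1_sq[OF q(1)] by simp
      moreover have "pm1 (q * s')" using pm1_mult[OF q(1) s'(1)] .
      ultimately show ?thesis by (auto simp: pm1_def)
    next
      assume h: "P (sd I K) w0 = - w0"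
      have "P I (v K) = (- s') *\<^sub>R w0" using s'(2) w0W h by (simp add: v_def)
      then have a1: "P I (P I (v K)) = (- s') *\<^sub>R v I" using w0W Pscale[of w0 I "- s'"] by (simp add: v_def)
      have "P I (P I (v K)) = q *\<^sub>R v K" using q(2) vW by blast
      then have "q *\<^sub>R v K = (- s') *\<^sub>R v I" using a1 by simp
      then have "(q * q) *\<^sub>R v K = (q * - s') *\<^sub>R v I" by (metis scaleR_scaleR)
      then have "v K = (q * - s') *\<^sub>R v I" using pm1_sq[OF q(1)] by simp
      moreover have "pm1 (q * - s')" using pm1_mult[OF q(1) pm1_uminus[OF s'(1)]] .
      ultimately show ?thesis by (auto simp: pm1_def)
    qed
  qed
  have norm: "pm1 (g (v I) (v I))" if I: "I \<subseteq> {..<n}" for I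
  proof -
    obtain s where s: "pm1 s" "\<forall>u\<in>W. \<forall>v\<in>W. g (P I u) v = s * g u (P I v)" using P_adj by blast
    obtain q where q: "pm1 q" "\<forall>u\<in>W. P I (P I u) = q *\<^sub>R u" using P_sq[OF I] by blast
    have "g (v I) (v I) = s * q * g w0 w0" using s(2) q(2) w0W by (simp add: v_def PW gscaleR)
    then show ?thesis using pm1_mult[OF pm1_mult[OF s(1) q(1)] gw0] by simp
  qed
  define Ireps where "Ireps = {I \<in> Pow {..<n}. \<forall>K\<in>Pow {..<n}. (v K = v I \<or> v K = - v I) \<longrightarrow> set_encode I \<le> set_encode K}"
  have Ireps_sub: "Ireps \<subseteq> Pow {..<n}" by (auto simp: Ireps_def)
  have fin: "I \<subseteq> {..<n} \<Longrightarrow> finite I" for I using finite_subset by blast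
  have rep: "\<exists>I'\<in>Ireps. v I' = v I \<or> v I' = - v I" if I: "I \<subseteq> {..<n}" for I
  proof -
    define C where "C = {K \<in> Pow {..<n}. v K = v I \<or> v K = - v I}"
    have "I \<in> C" using I by (simp add: C_def)
    then obtain I' where I': "I' \<in> C" "\<forall>K. K \<in> C \<longrightarrow> set_encode I' \<le> set_encode K"
      using ex_has_least_nat[of "\<lambda>K. K \<in> C" I set_encode] by blast
    have "I' \<in> Ireps"
      unfolding Ireps_def
    proof (intro CollectI conjI ballI impI)
      show "I' \<in> Pow {..<n}" using I'(1) by (simp add: C_def)
      fix K assume K: "K \<in> Pow {..<n}" "v K = v I' \<or> v K = - v I'"
      have "K \<in> C" using K I'(1) by (auto simp: C_def)
      then show "set_encode I' \<le> set_encode K" using I'(2) by blast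
    qed
    then show ?thesis using I'(1) by (auto simp: C_def)
  qed
  have rep_dist: "v I \<noteq> v K \<and> v I \<noteq> - v K" if "I \<in> Ireps" "K \<in> Ireps" "I \<noteq> K" for I K
  proof (rule ccontr)
    assume "\<not> ?thesis"
    then have h: "v K = v I \<or> v K = - v I" by auto
    then have h2: "v I = v K \<or> v I = - v K" by auto
    have "set_encode I \<le> set_encode K" using that(1,2) h by (auto simp: Ireps_def)
    moreover have "set_encode K \<le> set_encode I" using that(1,2) h2 by (auto simp: Ireps_def)
    ultimately have "set_encode I = set_encode K" by simp
    then have "I = K" using that(1,2) Ireps_sub fin by (meson Pow_iff set_encode_eq subsetD)
    then show False using that(3) by simp
  qed
  have rep_orth: "g (v I) (v K) = 0" if "I \<in> Ireps" "K \<in> Ireps" "I \<noteq> K" for I K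
    using pairs[of I K] rep_dist[OF that] rep_dist[OF that(2,1)] that Ireps_sub by auto
  define L where "L = sorted_list_of_set (set_encode ` Ireps)"
  have finIreps: "finite Ireps" using Ireps_sub finite_subset by blast
  have setL: "set L = set_encode ` Ireps" and distL: "distinct L"
    using finIreps by (simp_all add: L_def)
  define m where "m = length L"
  define vb where "vb i = v (set_decode (L ! i))" for i
  have dec: "i < m \<Longrightarrow> set_decode (L ! i) \<in> Ireps" for i
  proof -
    assume "i < m"
    then have "L ! i \<in> set_encode ` Ireps" using setL m_def nth_mem by metis
    then obtain I where "I \<in> Ireps" "L ! i = set_encode I" by blast
    then show ?thesis using Ireps_sub fin by (simp add: subset_iff)
  qed
  define R where "R = vb ` {..<m}"
  have R_eq: "R = v ` Ireps"
  proof
    show "R \<subseteq> v ` Ireps" using dec by (auto simp: R_def vb_def)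
    show "v ` Ireps \<subseteq> R"
    proof
      fix x assume "x \<in> v ` Ireps"
      then obtain I where I: "I \<in> Ireps" "x = v I" by blast
      then have "set_encode I \<in> set L" using setL by blast
      then obtain i where i: "i < m" "L ! i = set_encode I" by (metis in_set_conv_nth m_def)
      have "set_decode (L ! i) = I" using i(2) I(1) Ireps_sub fin by auto
      then have "vb i = x" using i I by (simp add: vb_def)
      then show "x \<in> R" using i(1) by (auto simp: R_def)
    qed
  qed
  have inj: "inj_on vb {..<m}"
  proof (rule inj_onI)
    fix i j assume ij: "i \<in> {..<m}" "j \<in> {..<m}" "vb i = vb j"
    show "i = j"
    proof (rule ccontr)
      assume "i \<noteq> j"
      then have "L ! i \<noteq> L ! j" using distL ij by (simp add: m_def nth_eq_iff_index_eq)
      then have "set_decode (L ! i) \<noteq> set_decode (L ! j)" by (metis set_decode_inverse)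
      then show False using rep_dist[OF dec dec] ij by (auto simp: vb_def)
    qed
  qed
  have RW: "R \<subseteq> W" using vW by (auto simp: R_def vb_def)
  have finR: "finite R" by (simp add: R_def)
  have Rorth: "x \<in> R \<Longrightarrow> y \<in> R \<Longrightarrow> x \<noteq> y \<Longrightarrow> g x y = 0" for x y
    using rep_orth unfolding R_eq by blast
  have Rnorm: "x \<in> R \<Longrightarrow> pm1 (g x x)" for x using norm Ireps_sub unfolding R_eq by blast
  have Rcoef: "g (\<Sum>v\<in>R. u v *\<^sub>R v) y = u y * g y y" if y: "y \<in> R" for u y
  proof -
    have "g (\<Sum>v\<in>R. u v *\<^sub>R v) y = (\<Sum>x\<in>R. g (u x *\<^sub>R x) y)"
      using RW y finR by (intro gsumL) (auto simp: Wscale)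
    also have "\<dots> = (\<Sum>x\<in>R. u x * g x y)" using RW y by (intro sum.cong) (auto simp: gscaleL subset_iff)
    also have "\<dots> = u y * g y y"
      using finR y by (subst sum.remove[of R y]) (auto simp: Rorth intro!: sum.neutral)
    finally show ?thesis .
  qed
  have indR: "independent R"
  proof -
    have "\<not> (\<exists>u. (\<exists>v\<in>R. u v \<noteq> 0) \<and> (\<Sum>v\<in>R. u v *\<^sub>R v) = 0)"
    proof
      assume "\<exists>u. (\<exists>v\<in>R. u v \<noteq> 0) \<and> (\<Sum>v\<in>R. u v *\<^sub>R v) = 0"
      then obtain u y where y: "y \<in> R" "u y \<noteq> 0" and h: "(\<Sum>v\<in>R. u v *\<^sub>R v) = 0" by blast
      have "g 0 y = 0" using gscaleL[of 0 y 0] W0 RW y by auto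
      then have "u y * g y y = 0" using Rcoef[OF y(1), of u] h by simp
      then show False using pm1_ne0[OF Rnorm[OF y(1)]] y(2) by simp
    qed
    then show ?thesis using dependent_finite[OF finR] by blast
  qed
  define V where "V = span R"
  have subV: "subspace V" by (simp add: V_def)
  have VW: "V \<subseteq> W" unfolding V_def using RW subW by (simp add: span_minimal)
  have JkR: "\<exists>e r. pm1 e \<and> r \<in> R \<and> Jk k x = e *\<^sub>R r" if k: "k < n" and x: "x \<in> R" for k x
  proof -
    obtain I where I: "I \<in> Ireps" "x = v I" using x R_eq by blast
    have In: "I \<subseteq> {..<n}" using I Ireps_sub by blast
    obtain s where s: "pm1 s" "\<forall>u\<in>W. Jk k (P I u) = s *\<^sub>R P (sd I {k}) u" using Jk_P[OF k] by blast
    have Kn: "sd I {k} \<subseteq> {..<n}" using sd_sub[OF In] k by simp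
    obtain I' where I': "I' \<in> Ireps" "v I' = v (sd I {k}) \<or> v I' = - v (sd I {k})" using rep[OF Kn] by blast
    have "Jk k x = s *\<^sub>R v (sd I {k})" using s(2) I w0W by (simp add: v_def)
    then have "Jk k x = s *\<^sub>R v I' \<or> Jk k x = (- s) *\<^sub>R v I'" using I'(2) by auto
    then show ?thesis using I'(1) s(1) pm1_uminus[OF s(1)] R_eq by blast
  qed
  have J0: "J 0 x = 0" if "x \<in> W" for x using Jzlin[OF that, of 0 0 0 0] by simp
  have JR: "J z x \<in> V" if x: "x \<in> R" for z x
  proof -
    have xW: "x \<in> W" using x RW by blast
    have sub: "subspace {z. J z x \<in> V}"
      unfolding subspace_def
    proof (intro conjI allI impI; clarsimp)
      show "J 0 x \<in> V" using J0[OF xW] subV by (simp add: subspace_0)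
      fix a b assume "J a x \<in> V" "J b x \<in> V"
      then show "J (a + b) x \<in> V" using Jzlin[OF xW, of 1 a 1 b] subV by (simp add: subspace_add)
    next
      fix c a assume "J a x \<in> V"
      then show "J (c *\<^sub>R a) x \<in> V" using Jzlin[OF xW, of c a 0 a] subV by (simp add: subspace_scale)
    qed
    have base: "J z x \<in> V" if zz: "z \<in> zb ` {..<n}" for z
    proof -
      obtain k where k: "k < n" "z = zb k" using zz by blast
      obtain e r where "pm1 e" "r \<in> R" "Jk k x = e *\<^sub>R r" using JkR[OF k(1) x] by blast
      then show ?thesis using k by (simp add: Jk_def V_def span_base span_scale)
    qed
    have "z \<in> span (zb ` {..<n})" using onb by (simp add: orthonormal_basis_on_def)
    then show ?thesis using span_induct[of z "zb ` {..<n}" "\<lambda>z. J z x \<in> V"] sub base by blast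
  qed
  have JV: "J z x \<in> V" if x: "x \<in> V" for z x
  proof -
    have sub: "subspace {x. x \<in> V \<and> J z x \<in> V}"
    proof (rule subspaceI')
      show "0 \<in> {x. x \<in> V \<and> J z x \<in> V}" using subV Jscale[OF W0, of z 0] by (auto simp: subspace_0)
      fix a b assume ab: "a \<in> {x. x \<in> V \<and> J z x \<in> V}" "b \<in> {x. x \<in> V \<and> J z x \<in> V}"
      then have "a \<in> W" "b \<in> W" using VW by auto
      then show "a + b \<in> {x. x \<in> V \<and> J z x \<in> V}" using ab subV Jadd[of a b z] by (auto simp: subspace_add)
    next
      fix c a assume ab: "a \<in> {x. x \<in> V \<and> J z x \<in> V}"
      then have "a \<in> W" using VW by auto
      then show "c *\<^sub>R a \<in> {x. x \<in> V \<and> J z x \<in> V}" using ab subV Jscale[of a z c] by (auto simp: subspace_scale)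
    qed
    have "x \<in> span R" using x by (simp add: V_def)
    then show ?thesis using span_induct[of x R "\<lambda>x. x \<in> V \<and> J z x \<in> V"] sub JR
      by (auto simp: V_def span_base)
  qed
  have ndV: "x = 0" if x: "x \<in> V" and h: "\<forall>y\<in>V. g x y = 0" for x
  proof -
    obtain u where u: "x = (\<Sum>v\<in>R. u v *\<^sub>R v)" using x span_finite[OF finR] by (auto simp: V_def)
    have "u y = 0" if y: "y \<in> R" for y
    proof -
      have "g x y = 0" using h y by (simp add: V_def span_base)
      then show ?thesis using Rcoef[OF y, of u] u pm1_ne0[OF Rnorm[OF y]] by simp
    qed
    then show ?thesis using u by simp
  qed
  have cmV: "clifford_module UNIV B V J"
    unfolding clifford_module_def
  proof (intro conjI ballI allI)
    show "subspace V" by (rule subV)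
    fix z u assume u: "u \<in> V"
    then have uW: "u \<in> W" using VW by blast
    show "J z u \<in> V" using JV[OF u] .
    show "J z (J z u) = - (B z z *\<^sub>R u)" using Jsq[OF uW] .
    { fix w a b assume "w \<in> V" then have "w \<in> W" using VW by blast
      then show "J z (a *\<^sub>R u + b *\<^sub>R w) = a *\<^sub>R J z u + b *\<^sub>R J z w" using Jlin[OF uW] by blast }
    { fix z' a b show "J (a *\<^sub>R z + b *\<^sub>R z') u = a *\<^sub>R J z u + b *\<^sub>R J z' u" using Jzlin[OF uW] by blast }
  qed
  have bilV: "bilinear_on V g"
    unfolding bilinear_on_def
  proof (intro ballI allI)
    fix x y w a b assume "x \<in> V" "y \<in> V" "w \<in> V"
    then have "x \<in> W" "y \<in> W" "w \<in> W" using VW by auto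
    then show "g (a *\<^sub>R x + b *\<^sub>R y) w = a * g x w + b * g y w \<and>
        g w (a *\<^sub>R x + b *\<^sub>R y) = a * g w x + b * g w y" by (rule gbil)
  qed
  have symV: "\<forall>x\<in>V. \<forall>y\<in>V. g x y = g y x"
  proof (intro ballI)
    fix x y assume "x \<in> V" "y \<in> V"
    then have "x \<in> W" "y \<in> W" using VW by auto
    then show "g x y = g y x" by (rule gsym)
  qed
  have spV: "scalar_product_on V g"
    unfolding scalar_product_on_def using subV bilV symV ndV by blast
  have adjV: "\<forall>z\<in>UNIV. \<forall>u\<in>V. \<forall>w\<in>V. g (J z u) w = - g u (J z w)"
  proof (intro ballI)
    fix z u w assume "u \<in> V" "w \<in> V"
    then have "u \<in> W" "w \<in> W" using VW by auto
    then show "g (J z u) w = - g u (J z w)" by (rule gadj)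
  qed
  have admV: "admissible_module UNIV B V J g"
    unfolding admissible_module_def using cmV spV adjV by blast
  have R0: "R \<noteq> {}"
  proof -
    obtain I' where "I' \<in> Ireps" using rep[of "{}"] by blast
    then show ?thesis using R_eq by blast
  qed
  then obtain r where r: "r \<in> R" by blast
  have g00: "g 0 0 = 0" using gscaleL[of 0 0 0] W0 by simp
  have "r \<noteq> 0"
  proof
    assume "r = 0" then have "g r r = 0" using g00 by simp
    then show False using Rnorm[OF r] by (simp add: pm1_def)
  qed
  moreover have rV: "r \<in> V" unfolding V_def by (rule span_base[OF r])
  ultimately have Vnz: "V \<noteq> {0}" by blast
  have onbV: "orthonormal_basis_on V g m vb"
    unfolding orthonormal_basis_on_def
  proof (intro conjI allI impI)
    show "vb i \<in> V" if "i < m" for i using that by (auto simp: V_def R_def span_base)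
    show "inj_on vb {..<m}" by (rule inj)
    show "independent (vb ` {..<m})" using indR by (simp add: R_def)
    show "span (vb ` {..<m}) = V" by (simp add: V_def R_def)
    fix i j assume ij: "i < m" "j < m"
    { assume "i \<noteq> j"
      then have "vb i \<noteq> vb j" using inj ij by (auto simp: inj_on_def)
      then show "g (vb i) (vb j) = 0" using Rorth ij by (auto simp: R_def) }
  next
    fix i assume "i < m"
    then show "g (vb i) (vb i) = 1 \<or> g (vb i) (vb i) = -1" using Rnorm by (auto simp: R_def pm1_def)
  qed
  have ent: "g (J (zb k) (vb \<alpha>)) (vb \<beta>) \<in> {1, -1, 0}" if kab: "k < n" "\<alpha> < m" "\<beta> < m" for k \<alpha> \<beta>
  proof -
    have a: "vb \<alpha> \<in> R" "vb \<beta> \<in> R" using kab by (auto simp: R_def)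
    obtain e r where er: "pm1 e" "r \<in> R" "Jk k (vb \<alpha>) = e *\<^sub>R r" using JkR[OF kab(1) a(1)] by blast
    have "g (J (zb k) (vb \<alpha>)) (vb \<beta>) = e * g r (vb \<beta>)"
      using er RW a by (simp add: Jk_def[symmetric] gscaleL subset_iff)
    moreover have "g r (vb \<beta>) \<in> {1, -1, 0}"
      using Rorth[OF er(2) a(2)] Rnorm[OF a(2)] by (cases "r = vb \<beta>") (auto simp: pm1_def)
    ultimately show ?thesis using er(1) by (auto simp: pm1_def)
  qed
  show ?thesis using admV Vnz VW onbV ent by blast
qed

end

lemma scaleR_fun_apply: "(c *\<^sub>R f) x = c * f x" for f :: "'a \<Rightarrow> real"
  by (simp add: scaleR_fun_def)

lemma sum_fun_apply: "(sum F A) x = (\<Sum>a\<in>A. F a x)"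
  by (induction A rule: infinite_finite_induct) auto

lemma double_sum_anti:
  fixes a :: "nat \<Rightarrow> nat \<Rightarrow> 'a::real_vector"
  assumes "\<And>k j. k < n \<Longrightarrow> j < n \<Longrightarrow> k \<noteq> j \<Longrightarrow> a k j + a j k = 0"
  shows "(\<Sum>k<n. \<Sum>j<n. a k j) = (\<Sum>k<n. a k k)"
proof -
  define S where "S = (\<Sum>k<n. \<Sum>j<n. a k j)"
  have S2: "S = (\<Sum>k<n. \<Sum>j<n. a j k)" unfolding S_def by (metis sum.swap)
  have "S + S = (\<Sum>k<n. \<Sum>j<n. a k j) + (\<Sum>k<n. \<Sum>j<n. a j k)"
    by (subst S2[symmetric]) (simp add: S_def)
  also have "\<dots> = (\<Sum>k<n. \<Sum>j<n. a k j + a j k)" by (simp add: sum.distrib)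
  also have "\<dots> = (\<Sum>k<n. a k k + a k k)"
  proof (rule sum.cong[OF refl])
    fix k assume k: "k \<in> {..<n}"
    have "(\<Sum>j<n. a k j + a j k) = (a k k + a k k) + (\<Sum>j\<in>{..<n} - {k}. a k j + a j k)"
      using k by (subst sum.remove[of _ k]) auto
    also have "(\<Sum>j\<in>{..<n} - {k}. a k j + a j k) = 0"
      using k assms by (intro sum.neutral) auto
    finally show "(\<Sum>j<n. a k j + a j k) = a k k + a k k" by simp
  qed
  also have "\<dots> = (\<Sum>k<n. a k k) + (\<Sum>k<n. a k k)" by (simp add: sum.distrib)
  finally have "S + S = (\<Sum>k<n. a k k) + (\<Sum>k<n. a k k)" .
  then have "(2::real) *\<^sub>R S = (2::real) *\<^sub>R (\<Sum>k<n. a k k)" by (simp add: scaleR_2)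
  then show ?thesis unfolding S_def by simp
qed

definition sg :: "nat \<Rightarrow> nat set \<Rightarrow> real" where "sg k T = (-1) ^ card {i\<in>T. i < k}"

lemma sg_pm: "sg k T * sg k T = 1"
  by (simp add: sg_def power_mult_distrib[symmetric] flip: power_add)

lemma sg_remove: "finite T \<Longrightarrow> sg k (T - {j}) = (if j \<in> T \<and> j < k then - sg k T else sg k T)"
proof -
  assume fT: "finite T"
  have e: "{i\<in>T - {j}. i < k} = {i\<in>T. i < k} - {j}" by auto
  have f: "finite {i\<in>T. i < k}" using fT by simp
  show ?thesis
  proof (cases "j \<in> T \<and> j < k")
    case True
    then have "j \<in> {i\<in>T. i < k}" by simp
    then have c: "card {i\<in>T. i < k} = Suc (card ({i\<in>T. i < k} - {j}))"
      using f by (metis card_Suc_Diff1)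
    show ?thesis using True unfolding sg_def e c by simp
  next
    case False
    then have "{i\<in>T. i < k} - {j} = {i\<in>T. i < k}" by auto
    then show ?thesis using False unfolding sg_def e by simp
  qed
qed

lemma sg_insert: "finite T \<Longrightarrow> sg k (insert j T) = (if j \<notin> T \<and> j < k then - sg k T else sg k T)"
proof -
  assume fT: "finite T"
  show ?thesis
  proof (cases "j \<in> T")
    case True then show ?thesis by (simp add: insert_absorb)
  next
    case False
    have "sg k T = sg k (insert j T - {j})" using False by simp
    also have "\<dots> = (if j < k then - sg k (insert j T) else sg k (insert j T))"
      using sg_remove[of "insert j T" k j] fT by simp
    finally show ?thesis using False by (auto simp: sg_def)
  qed
qed

lemma sg_self_remove: "finite T \<Longrightarrow> sg k (T - {k}) = sg k T" by (simp add: sg_remove)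
lemma sg_self_insert: "finite T \<Longrightarrow> sg k (insert k T) = sg k T" by (simp add: sg_insert)

locale ex =
  fixes B :: "'z::real_vector \<Rightarrow> 'z \<Rightarrow> real" and n :: nat and zb :: "nat \<Rightarrow> 'z"
  assumes spB: "scalar_product_on UNIV B" and onb: "orthonormal_basis_on UNIV B n zb"
begin

definition ek :: "nat \<Rightarrow> real" where "ek k = B (zb k) (zb k)"

lemma ek_sq: "k < n \<Longrightarrow> ek k * ek k = 1"
  using onb by (auto simp: orthonormal_basis_on_def ek_def)
lemma ek_ne0: "k < n \<Longrightarrow> ek k \<noteq> 0" using ek_sq by force

definition JS :: "nat \<Rightarrow> (nat set \<Rightarrow> real) \<Rightarrow> nat set \<Rightarrow> real" where
  "JS k F T = sg k T * (if k \<in> T then F (T - {k}) else - ek k * F (insert k T))"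

lemma JS_sq: "finite T \<Longrightarrow> JS k (JS k F) T = - ek k * F T"
proof (cases "k \<in> T")
  case True
  assume fT: "finite T"
  have "JS k (JS k F) T = sg k T * (sg k (T - {k}) * (- ek k * F (insert k (T - {k}))))"
    using True by (simp add: JS_def)
  also have "\<dots> = (sg k T * sg k T) * (- ek k * F T)" using True fT by (simp add: sg_self_remove insert_absorb)
  finally show ?thesis by (simp add: sg_pm)
next
  case False
  assume fT: "finite T"
  have "JS k (JS k F) T = sg k T * (- ek k * (sg k (insert k T) * F (insert k T - {k})))"
    using False by (simp add: JS_def)
  also have "\<dots> = (sg k T * sg k T) * (- ek k * F T)" using False fT by (simp add: sg_self_insert)
  finally show ?thesis by (simp add: sg_pm)
qed

lemma JS_anti: assumes fT: "finite T" and jk: "j \<noteq> k"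
  shows "JS j (JS k F) T = - JS k (JS j F) T"
proof -
  consider (a) "j \<in> T" "k \<in> T" | (b) "j \<in> T" "k \<notin> T" | (c) "j \<notin> T" "k \<in> T" | (d) "j \<notin> T" "k \<notin> T" by blast
  then show ?thesis
  proof cases
    case a
    have s1: "T - {j} - {k} = T - {k} - {j}" by auto
    show ?thesis using a jk fT
      by (cases "j < k") (auto simp: JS_def sg_remove s1)
  next
    case b
    have s1: "insert k (T - {j}) = insert k T - {j}" using jk by auto
    show ?thesis using b jk fT
      by (cases "j < k") (auto simp: JS_def sg_remove sg_insert s1)
  next
    case c
    have s1: "insert j (T - {k}) = insert j T - {k}" using jk by auto
    show ?thesis using c jk fT
      by (cases "j < k") (auto simp: JS_def sg_remove sg_insert s1)
  next
    case d
    have s1: "insert j (insert k T) = insert k (insert j T)" by auto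
    show ?thesis using d jk fT
      by (cases "j < k") (auto simp: JS_def sg_insert s1)
  qed
qed


lemma Bbil: "B (a *\<^sub>R x + b *\<^sub>R y) w = a * B x w + b * B y w \<and> B w (a *\<^sub>R x + b *\<^sub>R y) = a * B w x + b * B w y"
  using spB by (simp add: scalar_product_on_def bilinear_on_def)
lemma Bsym: "B x y = B y x" using spB by (simp add: scalar_product_on_def)
lemma orth: "j < n \<Longrightarrow> k < n \<Longrightarrow> j \<noteq> k \<Longrightarrow> B (zb j) (zb k) = 0"
  using onb by (auto simp: orthonormal_basis_on_def)

lemma Bsum: "finite A \<Longrightarrow> B (\<Sum>k\<in>A. \<alpha> k *\<^sub>R zb k) y = (\<Sum>k\<in>A. \<alpha> k * B (zb k) y)"
proof (induction A rule: finite_induct)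
  case empty
  show ?case using Bbil[of 0 0 0 0 y] by simp
next
  case (insert a A)
  then show ?case using Bbil[of "\<alpha> a" "zb a" 1 "\<Sum>k\<in>A. \<alpha> k *\<^sub>R zb k" y] by simp
qed

definition coef :: "nat \<Rightarrow> 'z \<Rightarrow> real" where "coef k z = B z (zb k) * ek k"

lemma coef_lin: "coef k (a *\<^sub>R z + b *\<^sub>R z') = a * coef k z + b * coef k z'"
  by (simp add: coef_def Bbil algebra_simps)

lemma expand: "B z z = (\<Sum>k<n. coef k z * coef k z * ek k)"
proof -
  have zs: "z \<in> span (zb ` {..<n})" using onb by (simp add: orthonormal_basis_on_def)
  have inj: "inj_on zb {..<n}" using onb by (simp add: orthonormal_basis_on_def)
  obtain u where "z = (\<Sum>v\<in>zb ` {..<n}. u v *\<^sub>R v)" using zs span_finite[of "zb ` {..<n}"] by auto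
  then have z: "z = (\<Sum>k<n. u (zb k) *\<^sub>R zb k)" by (simp add: sum.reindex[OF inj])
  define \<alpha> where "\<alpha> k = u (zb k)" for k
  have z': "z = (\<Sum>k<n. \<alpha> k *\<^sub>R zb k)" using z by (simp add: \<alpha>_def)
  have Bzj: "B z (zb j) = \<alpha> j * ek j" if j: "j < n" for j
  proof -
    have "B z (zb j) = (\<Sum>k<n. \<alpha> k * B (zb k) (zb j))" by (subst z') (rule Bsum, simp)
    also have "\<dots> = \<alpha> j * B (zb j) (zb j)"
      using j by (subst sum.remove[of _ j]) (auto intro!: sum.neutral simp: orth)
    finally show ?thesis by (simp add: ek_def)
  qed
  have cj: "coef j z = \<alpha> j" if "j < n" for j using Bzj[OF that] ek_sq[OF that] by (simp add: coef_def)
  have "B z z = (\<Sum>k<n. \<alpha> k * B (zb k) z)" by (subst (1) z') (rule Bsum, simp)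
  also have "\<dots> = (\<Sum>k<n. coef k z * coef k z * ek k)"
    by (rule sum.cong[OF refl]) (simp add: Bsym[of "zb _" z] Bzj cj)
  finally show ?thesis .
qed

definition Jk0 :: "nat \<Rightarrow> (nat \<Rightarrow> real) \<Rightarrow> nat \<Rightarrow> real" where
  "Jk0 k f = (\<lambda>a. JS k (\<lambda>T. f (set_encode T)) (set_decode a))"

definition J0 :: "'z \<Rightarrow> (nat \<Rightarrow> real) \<Rightarrow> nat \<Rightarrow> real" where
  "J0 z f = (\<Sum>k<n. coef k z *\<^sub>R Jk0 k f)"

definition V0 :: "(nat \<Rightarrow> real) set" where
  "V0 = {f. \<forall>a. \<not> set_decode a \<subseteq> {..<n} \<longrightarrow> f a = 0}"

definition eps :: "nat set \<Rightarrow> real" where "eps T = (\<Prod>i\<in>T. ek i)"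

definition g0 :: "(nat \<Rightarrow> real) \<Rightarrow> (nat \<Rightarrow> real) \<Rightarrow> real" where
  "g0 f h = (\<Sum>T\<in>Pow {..<n}. eps T * f (set_encode T) * h (set_encode T))"

lemma JS_cong: "(\<And>S. finite S \<Longrightarrow> G S = G' S) \<Longrightarrow> finite T \<Longrightarrow> JS k G T = JS k G' T"
  by (simp add: JS_def)

lemma Jk0_enc: "finite T \<Longrightarrow> Jk0 k f (set_encode T) = JS k (\<lambda>T. f (set_encode T)) T"
  by (simp add: Jk0_def)

lemma Jk0_Jk0: "Jk0 j (Jk0 k f) a = JS j (JS k (\<lambda>T. f (set_encode T))) (set_decode a)"
  unfolding Jk0_def[of j]
  by (rule JS_cong) (simp_all add: Jk0_enc)

lemma Jk0_lin: "Jk0 k (a *\<^sub>R f + b *\<^sub>R h) = a *\<^sub>R Jk0 k f + b *\<^sub>R Jk0 k h"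
  by (rule ext) (simp add: Jk0_def JS_def scaleR_fun_apply algebra_simps)

lemma Jk0_sum: "Jk0 k (sum F A) = (\<Sum>a\<in>A. Jk0 k (F a))"
proof (induction A rule: infinite_finite_induct)
  case (infinite A) then show ?case by (simp add: Jk0_def JS_def fun_eq_iff)
next
  case empty then show ?case by (simp add: Jk0_def JS_def fun_eq_iff)
next
  case (insert x A)
  have "Jk0 k (sum F (insert x A)) = Jk0 k (F x + sum F A)" by (simp only: sum.insert[OF insert(1,2)])
  also have "\<dots> = Jk0 k (F x) + Jk0 k (sum F A)" using Jk0_lin[of k 1 "F x" 1 "sum F A"] by (simp only: scaleR_one)
  also have "\<dots> = (\<Sum>a\<in>insert x A. Jk0 k (F a))" by (simp only: insert.IH sum.insert[OF insert(1,2)])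
  finally show ?case .
qed

lemma Jk0_scale: "Jk0 k (c *\<^sub>R f) = c *\<^sub>R Jk0 k f"
  using Jk0_lin[of k c f 0 f] by (simp add: Jk0_def JS_def fun_eq_iff scaleR_fun_apply)

lemma Jk0_sq: "Jk0 k (Jk0 k f) = (- ek k) *\<^sub>R f"
proof (rule ext)
  fix a
  have "Jk0 k (Jk0 k f) a = JS k (JS k (\<lambda>T. f (set_encode T))) (set_decode a)" by (rule Jk0_Jk0)
  also have "\<dots> = - ek k * f (set_encode (set_decode a))" by (rule JS_sq) simp
  also have "\<dots> = ((- ek k) *\<^sub>R f) a" by (simp only: set_decode_inverse scaleR_fun_apply)
  finally show "Jk0 k (Jk0 k f) a = ((- ek k) *\<^sub>R f) a" .
qed

lemma Jk0_anti: assumes jk: "j \<noteq> k" shows "Jk0 j (Jk0 k f) + Jk0 k (Jk0 j f) = 0"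
proof (rule ext)
  fix a
  have "Jk0 j (Jk0 k f) a = JS j (JS k (\<lambda>T. f (set_encode T))) (set_decode a)" by (rule Jk0_Jk0)
  also have "\<dots> = - JS k (JS j (\<lambda>T. f (set_encode T))) (set_decode a)" by (rule JS_anti) (simp_all add: jk)
  also have "\<dots> = - Jk0 k (Jk0 j f) a" by (simp only: Jk0_Jk0)
  finally show "(Jk0 j (Jk0 k f) + Jk0 k (Jk0 j f)) a = 0 a" by (simp only: plus_fun_apply zero_fun_apply)
qed

lemma J0_sq: "J0 z (J0 z f) = - (B z z *\<^sub>R f)"
proof -
  have "J0 z (J0 z f) = (\<Sum>k<n. \<Sum>j<n. (coef k z * coef j z) *\<^sub>R Jk0 k (Jk0 j f))"
    unfolding J0_def by (simp add: Jk0_sum Jk0_scale scaleR_sum_right)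
  also have "\<dots> = (\<Sum>k<n. (coef k z * coef k z) *\<^sub>R Jk0 k (Jk0 k f))"
  proof (rule double_sum_anti)
    fix k j assume "k < n" "j < n" "k \<noteq> j"
    then show "(coef k z * coef j z) *\<^sub>R Jk0 k (Jk0 j f) + (coef j z * coef k z) *\<^sub>R Jk0 j (Jk0 k f) = 0"
      using Jk0_anti[of k j f] by (simp add: mult.commute scaleR_right_distrib[symmetric])
  qed
  also have "\<dots> = (\<Sum>k<n. (- (coef k z * coef k z * ek k)) *\<^sub>R f)"
    by (simp add: Jk0_sq)
  also have "\<dots> = - (B z z *\<^sub>R f)"
    by (simp add: expand scaleR_sum_left[symmetric] sum_negf)
  finally show ?thesis .
qed

lemma J0_lin: "J0 z (a *\<^sub>R f + b *\<^sub>R h) = a *\<^sub>R J0 z f + b *\<^sub>R J0 z h"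
  by (simp add: J0_def Jk0_lin scaleR_sum_right sum.distrib scaleR_right_distrib mult.commute)

lemma J0_zlin: "J0 (a *\<^sub>R z + b *\<^sub>R z') f = a *\<^sub>R J0 z f + b *\<^sub>R J0 z' f"
  by (simp add: J0_def coef_lin scaleR_sum_right sum.distrib scaleR_add_left)


lemma sum_Pow_split:
  fixes \<phi> :: "nat set \<Rightarrow> real"
  assumes "k \<in> N" "finite N"
  shows "(\<Sum>T\<in>Pow N. \<phi> T) = (\<Sum>T\<in>Pow (N - {k}). \<phi> T + \<phi> (insert k T))"
proof -
  define M where "M = N - {k}"
  have N: "N = insert k M" using assms(1) by (auto simp: M_def)
  have kM: "k \<notin> M" by (simp add: M_def)
  have fM: "finite M" using assms(2) by (simp add: M_def)
  have inj: "inj_on (insert k) (Pow M)"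
    by (rule inj_onI) (use kM in \<open>auto simp: insert_ident\<close>)
  have dj: "Pow M \<inter> insert k ` Pow M = {}" using kM by auto
  have "(\<Sum>T\<in>Pow N. \<phi> T) = (\<Sum>T\<in>Pow M. \<phi> T) + (\<Sum>T\<in>insert k ` Pow M. \<phi> T)"
    unfolding N Pow_insert by (rule sum.union_disjoint) (use fM dj in auto)
  also have "(\<Sum>T\<in>insert k ` Pow M. \<phi> T) = (\<Sum>T\<in>Pow M. \<phi> (insert k T))"
    by (rule sum.reindex[OF inj, unfolded comp_def])
  finally show ?thesis by (simp add: M_def sum.distrib)
qed

lemma eps_insert: "finite T \<Longrightarrow> k \<notin> T \<Longrightarrow> eps (insert k T) = ek k * eps T"
  by (simp add: eps_def)

lemma fin_Pow: "T \<in> Pow {..<(n::nat)} \<Longrightarrow> finite T"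
  using finite_subset by auto

lemma g0_adm_k:
  assumes k: "k < n"
  shows "g0 (Jk0 k f) h = - g0 f (Jk0 k h)"
proof -
  define F where "F = (\<lambda>T. f (set_encode T))"
  define H where "H = (\<lambda>T. h (set_encode T))"
  define N where "N = {..<n::nat}"
  have kN: "k \<in> N" using k by (simp add: N_def)
  have fN: "finite N" by (simp add: N_def)
  have fin: "finite T" if "T \<in> Pow (N - {k})" for T using that fN finite_subset by auto
  have "g0 (Jk0 k f) h = (\<Sum>T\<in>Pow N. eps T * JS k F T * H T)"
    unfolding g0_def N_def
    by (rule sum.cong[OF refl]) (simp add: Jk0_enc fin_Pow F_def H_def)
  also have "\<dots> = (\<Sum>T\<in>Pow (N - {k}). eps T * JS k F T * H T + eps (insert k T) * JS k F (insert k T) * H (insert k T))"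
    by (rule sum_Pow_split[OF kN fN])
  also have "\<dots> = (\<Sum>T\<in>Pow (N - {k}). - (eps T * F T * JS k H T + eps (insert k T) * F (insert k T) * JS k H (insert k T)))"
  proof (rule sum.cong[OF refl])
    fix T assume T: "T \<in> Pow (N - {k})"
    have fT: "finite T" using fin[OF T] .
    have kT: "k \<notin> T" using T by auto
    have e1: "insert k T - {k} = T" using kT by auto
    show "eps T * JS k F T * H T + eps (insert k T) * JS k F (insert k T) * H (insert k T) =
          - (eps T * F T * JS k H T + eps (insert k T) * F (insert k T) * JS k H (insert k T))"
      using kT fT by (simp add: JS_def e1 eps_insert sg_self_insert algebra_simps)
  qed
  also have "\<dots> = - (\<Sum>T\<in>Pow N. eps T * F T * JS k H T)"
    by (subst sum_Pow_split[OF kN fN]) (simp only: sum_negf)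
  also have "(\<Sum>T\<in>Pow N. eps T * F T * JS k H T) = g0 f (Jk0 k h)"
    unfolding g0_def N_def
    by (rule sum.cong[OF refl]) (simp add: Jk0_enc fin_Pow F_def H_def)
  finally show ?thesis .
qed

lemma g0_bil: "g0 (a *\<^sub>R f + b *\<^sub>R f') h = a * g0 f h + b * g0 f' h"
  unfolding g0_def
  by (simp add: scaleR_fun_apply sum.distrib sum_distrib_left algebra_simps)

lemma g0_sym: "g0 f h = g0 h f"
  unfolding g0_def by (simp add: mult.commute mult.left_commute)

lemma g0_bil2: "g0 h (a *\<^sub>R f + b *\<^sub>R f') = a * g0 h f + b * g0 h f'"
  using g0_bil[of a f b f' h] by (simp add: g0_sym)

lemma g0_sum: "g0 (\<Sum>k\<in>A. c k *\<^sub>R G k) h = (\<Sum>k\<in>A. c k * g0 (G k) h)"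
proof (induction A rule: infinite_finite_induct)
  case (infinite A) then show ?case by (simp add: g0_def)
next
  case empty then show ?case by (simp add: g0_def)
next
  case (insert x A)
  have "g0 (\<Sum>k\<in>insert x A. c k *\<^sub>R G k) h = g0 (c x *\<^sub>R G x + 1 *\<^sub>R (\<Sum>k\<in>A. c k *\<^sub>R G k)) h"
    by (simp only: sum.insert[OF insert(1,2)] scaleR_one)
  also have "\<dots> = c x * g0 (G x) h + 1 * g0 (\<Sum>k\<in>A. c k *\<^sub>R G k) h" by (rule g0_bil)
  also have "\<dots> = (\<Sum>k\<in>insert x A. c k * g0 (G k) h)" by (simp only: insert.IH sum.insert[OF insert(1,2)] mult_1)
  finally show ?case .
qed

lemma g0_adm: "g0 (J0 z f) h = - g0 f (J0 z h)"
proof -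
  have "g0 (J0 z f) h = (\<Sum>k<n. coef k z * g0 (Jk0 k f) h)" unfolding J0_def by (rule g0_sum)
  also have "\<dots> = (\<Sum>k<n. - (coef k z * g0 f (Jk0 k h)))" by (rule sum.cong) (simp_all add: g0_adm_k)
  also have "\<dots> = - (\<Sum>k<n. coef k z * g0 (Jk0 k h) f)" by (simp add: sum_negf g0_sym)
  also have "(\<Sum>k<n. coef k z * g0 (Jk0 k h) f) = g0 (J0 z h) f" unfolding J0_def by (rule g0_sum[symmetric])
  finally show ?thesis by (simp add: g0_sym)
qed

definition dl :: "nat \<Rightarrow> nat \<Rightarrow> real" where "dl a = (\<lambda>b. if b = a then 1 else 0)"

lemma subV0: "subspace V0"
  unfolding subspace_def V0_def by (auto simp: scaleR_fun_apply)

lemma Jk0_V0: "k < n \<Longrightarrow> f \<in> V0 \<Longrightarrow> Jk0 k f \<in> V0"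
proof -
  assume k: "k < n" and f: "f \<in> V0"
  show ?thesis unfolding V0_def
  proof (intro CollectI allI impI)
    fix a assume a: "\<not> set_decode a \<subseteq> {..<n}"
    define T where "T = set_decode a"
    have fT: "finite T" by (simp add: T_def)
    have "\<not> T - {k} \<subseteq> {..<n}" "\<not> insert k T \<subseteq> {..<n}" using a k by (auto simp: T_def)
    then have "f (set_encode (T - {k})) = 0" "f (set_encode (insert k T)) = 0"
      using f fT by (auto simp: V0_def)
    then show "Jk0 k f a = 0" by (simp add: Jk0_def JS_def T_def[symmetric])
  qed
qed

lemma J0_V0: "f \<in> V0 \<Longrightarrow> J0 z f \<in> V0"
  unfolding J0_def using subV0 Jk0_V0 by (intro subspace_sum) (auto intro: subspace_scale)

lemma dl_V0: "set_decode a \<subseteq> {..<n} \<Longrightarrow> dl a \<in> V0"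
  by (auto simp: V0_def dl_def)

lemma eps_ne0: "T \<subseteq> {..<n} \<Longrightarrow> eps T \<noteq> 0"
proof -
  assume T: "T \<subseteq> {..<n}"
  then have fT: "finite T" using finite_subset by blast
  have "\<forall>i\<in>T. ek i \<noteq> 0" using T ek_ne0 by blast
  then show ?thesis using fT unfolding eps_def by (simp only: prod_zero_iff) blast
qed

lemma g0_dl: assumes T: "T \<subseteq> {..<n}" shows "g0 f (dl (set_encode T)) = eps T * f (set_encode T)"
proof -
  have fin: "finite S" if "S \<in> Pow {..<n}" for S using that finite_subset by auto
  have fT: "finite T" using T finite_subset by blast
  have "g0 f (dl (set_encode T)) = (\<Sum>S\<in>Pow {..<n}. if S = T then eps S * f (set_encode S) else 0)"
    unfolding g0_def dl_def
  proof (rule sum.cong[OF refl])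
    fix S assume S: "S \<in> Pow {..<n}"
    have "set_encode S = set_encode T \<longleftrightarrow> S = T" using set_encode_eq[OF fin[OF S] fT] .
    then show "eps S * f (set_encode S) * (if set_encode S = set_encode T then 1 else 0) =
          (if S = T then eps S * f (set_encode S) else 0)" by simp
  qed
  also have "\<dots> = eps T * f (set_encode T)" using T by simp
  finally show ?thesis .
qed

lemma nd_V0: "f \<in> V0 \<Longrightarrow> (\<forall>h\<in>V0. g0 f h = 0) \<Longrightarrow> f = 0"
proof -
  assume f: "f \<in> V0" and h: "\<forall>h\<in>V0. g0 f h = 0"
  show "f = 0"
  proof (rule ext)
    fix a
    show "f a = 0 a"
    proof (cases "set_decode a \<subseteq> {..<n}")
      case True
      define T where "T = set_decode a"
      have e: "set_encode T = a" by (simp add: T_def)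
      have TT: "T \<subseteq> {..<n}" using True by (simp add: T_def)
      have g1: "g0 f (dl a) = eps T * f a" using g0_dl[OF TT, of f] unfolding e .
      have "g0 f (dl a) = 0" using h dl_V0[OF True] by blast
      then have "eps T * f a = 0" using g1 by simp
      then show ?thesis using eps_ne0[OF TT] by simp
    next
      case False then show ?thesis using f by (simp add: V0_def)
    qed
  qed
qed

lemma span_V0: "span (dl ` set_encode ` Pow {..<n}) = V0"
proof
  show "span (dl ` set_encode ` Pow {..<n}) \<subseteq> V0"
    using subV0 dl_V0 by (intro span_minimal) (auto simp: fin_Pow)
  show "V0 \<subseteq> span (dl ` set_encode ` Pow {..<n})"
  proof
    fix f assume f: "f \<in> V0"
    have eq: "f = (\<Sum>T\<in>Pow {..<n}. f (set_encode T) *\<^sub>R dl (set_encode T))"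
    proof (rule ext)
      fix b
      have fin: "finite S" if "S \<in> Pow {..<n}" for S using that finite_subset by auto
      have "(\<Sum>T\<in>Pow {..<n}. f (set_encode T) *\<^sub>R dl (set_encode T)) b =
            (\<Sum>T\<in>Pow {..<n}. if set_decode b = T then f b else 0)"
        unfolding sum_fun_apply
        by (rule sum.cong[OF refl]) (use fin in \<open>auto simp: scaleR_fun_apply dl_def\<close>)
      also have "\<dots> = f b" using f by (auto simp: V0_def)
      finally show "f b = (\<Sum>T\<in>Pow {..<n}. f (set_encode T) *\<^sub>R dl (set_encode T)) b" by simp
    qed
    have "(\<Sum>T\<in>Pow {..<n}. f (set_encode T) *\<^sub>R dl (set_encode T)) \<in> span (dl ` set_encode ` Pow {..<n})"
      by (intro span_sum span_scale span_base) auto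
    then show "f \<in> span (dl ` set_encode ` Pow {..<n})" by (simp only: eq[symmetric])
  qed
qed

lemma exists_mod: "\<exists>(V :: (nat \<Rightarrow> real) set) J g. admissible_module UNIV B V J g \<and> V \<noteq> {0} \<and> (\<exists>S. finite S \<and> span S = V)"
proof (intro exI conjI)
  have cm: "clifford_module UNIV B V0 J0"
    unfolding clifford_module_def by (simp add: subV0 J0_V0 J0_lin J0_zlin J0_sq)
  have bl: "bilinear_on V0 g0" unfolding bilinear_on_def by (simp add: g0_bil g0_bil2)
  have sy: "\<forall>x\<in>V0. \<forall>y\<in>V0. g0 x y = g0 y x" using g0_sym by blast
  have nd: "\<forall>x\<in>V0. (\<forall>y\<in>V0. g0 x y = 0) \<longrightarrow> x = 0" using nd_V0 by blast
  have sp: "scalar_product_on V0 g0" unfolding scalar_product_on_def using subV0 bl sy nd by blast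
  have ad: "\<forall>z\<in>UNIV. \<forall>u\<in>V0. \<forall>w\<in>V0. g0 (J0 z u) w = - g0 u (J0 z w)" using g0_adm by blast
  show "admissible_module UNIV B V0 J0 g0" unfolding admissible_module_def using cm sp ad by blast
  have "dl 0 \<in> V0" by (rule dl_V0) simp
  moreover have "dl 0 \<noteq> 0" by (auto simp: dl_def fun_eq_iff)
  ultimately show "V0 \<noteq> {0}" by blast
  show "finite (dl ` set_encode ` Pow {..<n})" by simp
  show "span (dl ` set_encode ` Pow {..<n}) = V0" by (rule span_V0)
qed

end

theorem theorem1p3:
  fixes B :: "'z::real_vector \<Rightarrow> 'z \<Rightarrow> real"
    and n :: nat and zb :: "nat \<Rightarrow> 'z"
  assumes "scalar_product_on (UNIV :: 'z set) B"
    and "orthonormal_basis_on (UNIV :: 'z set) B n zb"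
  shows "\<exists>(V :: (nat \<Rightarrow> real) set) J g m vb.
           admissible_module UNIV B V J g \<and> V \<noteq> {0} \<and>
           (\<forall>(W :: (nat \<Rightarrow> real) set) J' g'.
              admissible_module UNIV B W J' g' \<and> W \<noteq> {0} \<and>
              (\<exists>S. finite S \<and> span S = W) \<longrightarrow> dim V \<le> dim W) \<and>
           orthonormal_basis_on V g m vb \<and>
           (\<forall>z. \<forall>u\<in>V. \<forall>v\<in>V. g (J z u) (J z v) = B z z * g u v) \<and>
           (\<forall>z. \<forall>u\<in>V. J z (J z u) = - (B z z *\<^sub>R u)) \<and>
           (\<forall>k<n. \<forall>\<alpha><m. \<forall>\<beta><m. g (J (zb k) (vb \<alpha>)) (vb \<beta>) \<in> {1, -1, 0})"
proof -
  interpret E: ex B n zb using assms by unfold_locales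
  define Mods where "Mods = {W::(nat \<Rightarrow> real) set. \<exists>J g. admissible_module UNIV B W J g \<and> W \<noteq> {0} \<and> (\<exists>S. finite S \<and> span S = W)}"
  obtain W00 where "W00 \<in> Mods" using E.exists_mod unfolding Mods_def by blast
  then obtain W0 where W0: "W0 \<in> Mods" and W0min: "\<forall>W. W \<in> Mods \<longrightarrow> dim W0 \<le> dim W"
    using ex_has_least_nat[of "\<lambda>W. W \<in> Mods" W00 dim] by blast
  then obtain Jm gm S0 where adm0: "admissible_module UNIV B W0 Jm gm" and nz: "W0 \<noteq> {0}"
    and fS0: "finite S0" and sp0: "span S0 = W0" unfolding Mods_def by blast
  interpret A: adm_fd B n zb W0 Jm gm S0
    using assms adm0 fS0 sp0 nz by unfold_locales auto
  have QW: "A.Q W0" using A.Q_W nz .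
  obtain X where X: "A.Q X" "\<forall>Y. A.Q Y \<longrightarrow> dim X \<le> dim Y"
    using ex_has_least_nat[of A.Q W0 dim, OF QW] by blast
  interpret XM: xmin B n zb W0 Jm gm S0 X by unfold_locales (use X in auto)
  obtain w where w: "w \<in> W0" "gm w w \<noteq> 0" "\<forall>I\<subseteq>{..<n}. A.P I w = w \<or> A.P I w = - w \<or> gm w (A.P I w) = 0"
    using XM.good_exists by blast
  have gd: "A.good w" using w(3) by (simp add: A.good_def)
  obtain V m vb where V: "admissible_module UNIV B V Jm gm" "V \<noteq> {0}" "V \<subseteq> W0"
      "orthonormal_basis_on V gm m vb"
      "\<forall>k<n. \<forall>\<alpha><m. \<forall>\<beta><m. gm (Jm (zb k) (vb \<alpha>)) (vb \<beta>) \<in> {1, -1, 0}"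
    using A.nice_sub[OF w(1,2) gd] by blast
  have dimV: "dim V \<le> dim W0" using dim_mono_fd[OF V(3) fS0] sp0 by simp
  have minV: "\<forall>(W :: (nat \<Rightarrow> real) set) J' g'.
              admissible_module UNIV B W J' g' \<and> W \<noteq> {0} \<and>
              (\<exists>S. finite S \<and> span S = W) \<longrightarrow> dim V \<le> dim W"
  proof (intro allI impI)
    fix W :: "(nat \<Rightarrow> real) set" and J' :: "'z \<Rightarrow> (nat \<Rightarrow> real) \<Rightarrow> nat \<Rightarrow> real"
      and g' :: "(nat \<Rightarrow> real) \<Rightarrow> (nat \<Rightarrow> real) \<Rightarrow> real"
    assume "admissible_module UNIV B W J' g' \<and> W \<noteq> {0} \<and> (\<exists>S. finite S \<and> span S = W)"
    then have "W \<in> Mods" unfolding Mods_def by blast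
    then have "dim W0 \<le> dim W" using W0min by blast
    then show "dim V \<le> dim W" using dimV by linarith
  qed
  have sqV: "\<forall>z. \<forall>u\<in>V. Jm z (Jm z u) = - (B z z *\<^sub>R u)"
    using V(3) A.Jsq by blast
  have isoV: "\<forall>z. \<forall>u\<in>V. \<forall>v\<in>V. gm (Jm z u) (Jm z v) = B z z * gm u v"
  proof (intro allI ballI)
    fix z u v assume u: "u \<in> V" and v: "v \<in> V"
    have uW: "u \<in> W0" and vW: "v \<in> W0" using u v V(3) by auto
    have "gm (Jm z u) (Jm z v) = - gm u (Jm z (Jm z v))" using A.gadj[OF uW A.JW[OF vW]] .
    also have "\<dots> = - gm u (- (B z z *\<^sub>R v))" using A.Jsq[OF vW] by simp
    also have "\<dots> = B z z * gm u v" using A.gnegR[OF A.Wscale[OF vW] uW] A.gscaleR[OF vW uW] by simp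
    finally show "gm (Jm z u) (Jm z v) = B z z * gm u v" .
  qed
  show ?thesis
    apply (rule exI[of _ V], rule exI[of _ Jm], rule exI[of _ gm], rule exI[of _ m], rule exI[of _ vb])
    using V(1,2,4,5) minV sqV isoV by blast
qed

end
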